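(* Let $M$ be a topological manifold of dimension $n$ and let $B$ be a standard open ball in $M$. Then the subgroup of $\mathrm{Homeo}_0(M)$ consisting of homeomorphisms supported in $B$ is strongly distorted in $\mathrm{Homeo}_0(M)$.
   Context: $\mathrm{Homeo}_0(M)$ is the identity component of the homeomorphism group of $M$ with the compact-open topology. A standard open ball is an open subset of $M$ whose closure is homeomorphic to the closed unit ball in $\mathbb R^n$ and whose boundary is a locally flat $(n-1)$-sphere. The support of a homeomorphism is the closure of the set of points it moves. A subset $A$ of a group $G$ is strongly distorted in $G$ if there are $m\in\mathbb N$ and $(w_n)\subset\mathbb N$ such that for every sequence $(a_n)\subset A$ there is $S\subset G$ of cardinality $m$ with $a_n\in S^{w_n}=\{s_1\cdots s_{w_n}: s_i\in S\}$ for all $n$. *)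

theory Defs
  imports "HOL-Analysis.Analysis"
begin

definition topological_manifold ::
  "'m::{t2_space, second_countable_topology} itself \<Rightarrow> 'n::finite itself \<Rightarrow> bool" where
  "topological_manifold TYPE('m) TYPE('n) \<longleftrightarrow>
     (\<forall>x::'m. \<exists>U. open U \<and> x \<in> U \<and>
        (\<exists>V :: (real^'n) set. open V \<and> U homeomorphic V))"

definition locally_flat_hypersurface :: "'n::finite itself \<Rightarrow> 'm::topological_space set \<Rightarrow> bool" where
  "locally_flat_hypersurface TYPE('n) S \<longleftrightarrow>
     (\<forall>p\<in>S. \<exists>U. open U \<and> p \<in> U \<and>
        (\<exists>(h :: 'm \<Rightarrow> real^'n) g i. homeomorphism U UNIV h g \<and>
              h ` (U \<inter> S) = {x. x $ i = 0}))"

definition standard_open_ball :: "'n::finite itself \<Rightarrow> 'm::topological_space set \<Rightarrow> bool" where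
  "standard_open_ball TYPE('n) B \<longleftrightarrow>
     open B \<and> closure B homeomorphic (cball (0::real^'n) 1) \<and>
     frontier B homeomorphic (sphere (0::real^'n) 1) \<and>
     locally_flat_hypersurface TYPE('n) (frontier B)"

definition Homeo :: "('m::topological_space \<Rightarrow> 'm) set" where
  "Homeo = {f. \<exists>g. homeomorphism UNIV UNIV f g}"

definition compact_open_topology :: "('a::topological_space \<Rightarrow> 'b::topological_space) topology" where
  "compact_open_topology =
     topology_generated_by {{f. f ` K \<subseteq> U} | K U. compact K \<and> open U}"

definition Homeo0 :: "('m::topological_space \<Rightarrow> 'm) set" where
  "Homeo0 = connected_component_of_set (subtopology compact_open_topology Homeo) id"

definition support :: "('a::topological_space \<Rightarrow> 'a) \<Rightarrow> 'a set" where
  "support f = closure {x. f x \<noteq> x}"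

definition word_power :: "('a \<Rightarrow> 'a) set \<Rightarrow> nat \<Rightarrow> ('a \<Rightarrow> 'a) set" where
  "word_power S w = {foldr (\<circ>) l id | l. length l = w \<and> set l \<subseteq> S}"

definition strongly_distorted :: "('a \<Rightarrow> 'a) set \<Rightarrow> ('a \<Rightarrow> 'a) set \<Rightarrow> bool" where
  "strongly_distorted G A \<longleftrightarrow>
     (\<exists>m::nat. \<exists>w::nat \<Rightarrow> nat. \<forall>a::nat \<Rightarrow> ('a \<Rightarrow> 'a). (\<forall>k. a k \<in> A) \<longrightarrow>
        (\<exists>S. S \<subseteq> G \<and> finite S \<and> card S = m \<and> (\<forall>k. a k \<in> word_power S (w k))))"

end

theory Submission
  imports Defs
begin


definition Gb :: "('a::euclidean_space \<Rightarrow> 'a) set" where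
  "Gb = {f. continuous_on UNIV f \<and> inj f \<and> (\<forall>x. 1 \<le> norm x \<longrightarrow> f x = x)}"

lemma GbI:
  assumes "continuous_on UNIV f" "inj f" "\<And>x. 1 \<le> norm x \<Longrightarrow> f x = x"
  shows "f \<in> Gb"
  using assms unfolding Gb_def by auto

lemma Gb_cont: "f \<in> Gb \<Longrightarrow> continuous_on S f"
  unfolding Gb_def using continuous_on_subset by blast

lemma Gb_inj: "f \<in> Gb \<Longrightarrow> inj f"
  unfolding Gb_def by auto

lemma Gb_fix: "f \<in> Gb \<Longrightarrow> 1 \<le> norm x \<Longrightarrow> f x = x"
  unfolding Gb_def by auto

lemma Gb_surj:
  fixes f :: "'a::euclidean_space \<Rightarrow> 'a"
  assumes "f \<in> Gb" shows "surj f"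
proof -
  have o: "open (range f)"
    by (rule invariance_of_domain_gen) (use assms in \<open>auto simp: Gb_def\<close>)
  have eq: "range f = f ` cball 0 1 \<union> {x. 1 \<le> norm x}"
  proof
    show "range f \<subseteq> f ` cball 0 1 \<union> {x. 1 \<le> norm x}"
    proof
      fix y assume "y \<in> range f"
      then obtain x where y: "y = f x" by auto
      show "y \<in> f ` cball 0 1 \<union> {x. 1 \<le> norm x}"
      proof (cases "norm x \<le> 1")
        case True then show ?thesis using y by auto
      next
        case False then show ?thesis using y Gb_fix[OF assms, of x] by auto
      qed
    qed
    show "f ` cball 0 1 \<union> {x. 1 \<le> norm x} \<subseteq> range f"
      using Gb_fix[OF assms] by (auto simp: image_iff) (metis)
  qed
  have c1: "compact (f ` cball 0 1)"
    by (rule compact_continuous_image) (use assms Gb_cont in auto)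
  have "{x::'a. 1 \<le> norm x} = - ball 0 1" by auto
  then have c2: "closed {x::'a. 1 \<le> norm x}" by (simp add: closed_Compl)
  have "closed (range f)"
    unfolding eq using c1 c2 compact_imp_closed by blast
  with o have "range f = {} \<or> range f = UNIV"
    using clopen by blast
  then show ?thesis by auto
qed

lemma Gb_bij: "f \<in> Gb \<Longrightarrow> bij f"
  using Gb_surj Gb_inj bij_def by blast

lemma Gb_homeo:
  fixes f :: "'a::euclidean_space \<Rightarrow> 'a"
  assumes "f \<in> Gb" shows "homeomorphism UNIV UNIV f (inv f)"
proof -
  have "continuous_on (range f) (inv f)"
    by (rule continuous_on_inverse_open) (use assms in \<open>auto simp: Gb_def\<close>)
  then show ?thesis
    using Gb_surj[OF assms] Gb_inj[OF assms] Gb_cont[OF assms]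
    by (auto simp: homeomorphism_def surj_f_inv_f inj_imp_surj_inv)
qed

lemma Gb_inv: "f \<in> Gb \<Longrightarrow> inv f \<in> Gb"
proof -
  assume f: "f \<in> Gb"
  have "continuous_on UNIV (inv f)" using Gb_homeo[OF f] homeomorphism_def by blast
  moreover have "inj (inv f)" using Gb_bij[OF f] bij_imp_bij_inv bij_is_inj by blast
  moreover have "inv f x = x" if "1 \<le> norm x" for x
    using Gb_fix[OF f that] Gb_inj[OF f] by (metis inv_f_f)
  ultimately show ?thesis by (rule GbI)
qed

lemma Gb_comp: "f \<in> Gb \<Longrightarrow> g \<in> Gb \<Longrightarrow> f \<circ> g \<in> Gb"
  apply (rule GbI)
  apply (metis Gb_cont continuous_on_compose)
  apply (simp add: Gb_inj inj_compose)
  by (simp add: Gb_fix)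

lemma Gb_id: "id \<in> Gb"
  by (rule GbI) auto

lemma Gb_funpow: "f \<in> Gb \<Longrightarrow> f ^^ k \<in> Gb"
  by (induction k) (auto simp: Gb_id Gb_comp)

lemma Gb_inv_l [simp]: "f \<in> Gb \<Longrightarrow> inv f (f x) = x"
  by (meson Gb_inj inv_f_f)
lemma Gb_inv_r [simp]: "f \<in> Gb \<Longrightarrow> f (inv f x) = x"
  by (meson Gb_surj surj_f_inv_f)

lemma Gb_ball: "f \<in> Gb \<Longrightarrow> norm x < 1 \<Longrightarrow> norm (f x) < 1"
  by (metis Gb_fix Gb_inj inj_eq not_less)

lemma Gb_cball: "f \<in> Gb \<Longrightarrow> norm x \<le> 1 \<Longrightarrow> norm (f x) \<le> 1"
  by (metis Gb_ball Gb_fix order.order_iff_strict)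

lemma Gb_fixset_in:
  assumes "f \<in> Gb" "\<And>x. x \<notin> K \<Longrightarrow> f x = x" "x \<in> K" shows "f x \<in> K"
  by (metis Gb_inj assms inj_eq)

lemma Gb_fixset_out:
  assumes "f \<in> Gb" "\<And>x. x \<notin> K \<Longrightarrow> f x = x" "x \<notin> K" shows "f x \<notin> K"
  using assms by simp

lemma funpow_inv_l: "f \<in> Gb \<Longrightarrow> (inv f ^^ k) ((f ^^ k) x) = x"
proof (induction k arbitrary: x)
  case (Suc k)
  have e: "(inv f ^^ Suc k) y = (inv f ^^ k) (inv f y)" for y
    by (simp add: funpow_Suc_right del: funpow.simps)
  have "(inv f ^^ Suc k) ((f ^^ Suc k) x) = (inv f ^^ k) (inv f (f ((f ^^ k) x)))"
    unfolding e by simp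
  then show ?case using Suc by simp
qed simp

lemma funpow_inv_r: "f \<in> Gb \<Longrightarrow> (f ^^ k) ((inv f ^^ k) x) = x"
proof (induction k arbitrary: x)
  case (Suc k)
  have e: "(f ^^ Suc k) y = (f ^^ k) (f y)" for y
    by (simp add: funpow_Suc_right del: funpow.simps)
  have "(f ^^ Suc k) ((inv f ^^ Suc k) x) = (f ^^ k) (f (inv f ((inv f ^^ k) x)))"
    unfolding e by simp
  then show ?case using Suc by simp
qed simp


definition rad :: "'a::euclidean_space \<Rightarrow> (real \<Rightarrow> real) \<Rightarrow> 'a \<Rightarrow> 'a" where
  "rad c l x = c + l (norm (x - c)) *\<^sub>R (x - c)"

lemma rad_norm:
  assumes "\<And>r. 0 \<le> r \<Longrightarrow> 0 < l r"
  shows "norm (rad c l x - c) = norm (x - c) * l (norm (x - c))"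
  using assms[of "norm (x - c)"] by (simp add: rad_def)

lemma rad_Gb:
  fixes c :: "'a::euclidean_space"
  assumes cont: "continuous_on UNIV l" and pos: "\<And>r. 0 \<le> r \<Longrightarrow> 0 < l r"
    and mono: "\<And>r s. 0 \<le> r \<Longrightarrow> r < s \<Longrightarrow> r * l r < s * l s"
    and fix1: "\<And>x. 1 \<le> norm x \<Longrightarrow> l (norm (x - c)) = 1"
  shows "rad c l \<in> Gb"
proof (rule GbI)
  show "continuous_on UNIV (rad c l)"
    unfolding rad_def
    by (intro continuous_intros continuous_on_compose2[OF cont]) auto
  show "rad c l x = x" if "1 \<le> norm x" for x
    using fix1[OF that] by (simp add: rad_def)
  show "inj (rad c l)"
  proof (rule injI)
    fix x y assume e: "rad c l x = rad c l y"
    have n: "norm (x - c) * l (norm (x - c)) = norm (y - c) * l (norm (y - c))"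
      using rad_norm[of l, OF pos, where c=c and x=x] rad_norm[of l, OF pos, where c=c and x=y] e by simp
    have "norm (x - c) = norm (y - c)"
    proof (rule ccontr)
      assume "norm (x - c) \<noteq> norm (y - c)"
      then consider "norm (x - c) < norm (y - c)" | "norm (y - c) < norm (x - c)" by linarith
      then show False
      proof cases
        case 1
        then have "norm (x - c) * l (norm (x - c)) < norm (y - c) * l (norm (y - c))"
          by (rule mono[OF norm_ge_zero])
        with n show False by simp
      next
        case 2
        then have "norm (y - c) * l (norm (y - c)) < norm (x - c) * l (norm (x - c))"
          by (rule mono[OF norm_ge_zero])
        with n show False by simp
      qed
    qed
    then have "l (norm (x - c)) *\<^sub>R (x - c) = l (norm (x - c)) *\<^sub>R (y - c)"
      using e by (simp add: rad_def)
    then show "x = y" using pos[of "norm (x - c)"] by simp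
  qed
qed

definition scl :: "real \<Rightarrow> real \<Rightarrow> real" where
  "scl a r = max (1/4) (min 1 (r / a - 3/4))"

abbreviation sc :: "'a::euclidean_space \<Rightarrow> real \<Rightarrow> 'a \<Rightarrow> 'a" where
  "sc c a \<equiv> rad c (scl a)"

lemma scl_pos: "0 < scl a r" by (simp add: scl_def)

lemma scl_mono: "0 < a \<Longrightarrow> r \<le> s \<Longrightarrow> scl a r \<le> scl a s"
  unfolding scl_def by (intro max.mono min.mono) (auto simp: divide_right_mono)

lemma sc_Gb:
  fixes c :: "'a::euclidean_space"
  assumes a: "0 < a" and c: "norm c + 7 * a / 4 \<le> 1"
  shows "sc c a \<in> Gb"
proof (rule rad_Gb)
  show "continuous_on UNIV (scl a)" unfolding scl_def using a by (intro continuous_intros) auto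
  show "0 < scl a r" for r by (rule scl_pos)
  show "r * scl a r < s * scl a s" if "0 \<le> r" "r < s" for r s
  proof -
    have "r * scl a r \<le> r * scl a s" using scl_mono[OF a, of r s] that by (intro mult_left_mono) auto
    also have "\<dots> < s * scl a s" using that scl_pos[of a s] by simp
    finally show ?thesis .
  qed
  show "scl a (norm (x - c)) = 1" if "1 \<le> norm x" for x
  proof -
    have "norm x \<le> norm (x - c) + norm c" using norm_triangle_ineq[of "x - c" c] by simp
    then have "7 * a / 4 \<le> norm (x - c)" using that c by linarith
    then have "7/4 \<le> norm (x - c) / a" by (subst pos_le_divide_eq[OF a]) linarith
    then have h: "1 \<le> norm (x - c) / a - 3/4" by linarith
    show ?thesis unfolding scl_def min.absorb1[OF h] by simp
  qed
qed

lemma sc_near: "0 < a \<Longrightarrow> norm (x - c) \<le> a \<Longrightarrow> sc c a x = c + (1/4) *\<^sub>R (x - c)"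
proof -
  assume a: "0 < a" and r: "norm (x - c) \<le> a"
  then have "norm (x - c) / a \<le> 1" by simp
  then have "scl a (norm (x - c)) = 1/4" unfolding scl_def by linarith
  then show ?thesis by (simp add: rad_def)
qed

lemma sc_far: "0 < a \<Longrightarrow> 7 * a / 4 \<le> norm (x - c) \<Longrightarrow> sc c a x = x"
proof -
  assume a: "0 < a" and r: "7 * a / 4 \<le> norm (x - c)"
  have "7/4 \<le> norm (x - c) / a" by (subst pos_le_divide_eq[OF a]) (use r in linarith)
  then have h: "1 \<le> norm (x - c) / a - 3/4" by linarith
  have "scl a (norm (x - c)) = 1" unfolding scl_def min.absorb1[OF h] by simp
  then show ?thesis by (simp add: rad_def)
qed

definition ann :: "'a::euclidean_space \<Rightarrow> real \<Rightarrow> real \<Rightarrow> 'a set" where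
  "ann c r1 r2 = {z. r1 \<le> norm (z - c) \<and> norm (z - c) \<le> r2}"

lemma sc_chain:
  fixes c :: "'a::euclidean_space"
  assumes a: "0 < a" and b: "0 < b1" "b2 \<le> a" "0 \<le> b2" and K: "K \<subseteq> ann c b1 b2"
  shows "(sc c a ^^ i) ` K \<subseteq> ann c (b1 / 4^i) (b2 / 4^i)"
proof (induction i)
  case 0 then show ?case using K by simp
next
  case (Suc i)
  show ?case
  proof
    fix z assume "z \<in> (sc c a ^^ Suc i) ` K"
    then obtain w where w: "w \<in> (sc c a ^^ i) ` K" and z: "z = sc c a w" by auto
    have wa: "w \<in> ann c (b1 / 4^i) (b2 / 4^i)" using Suc w by auto
    have "b2 / 4^i \<le> b2 / 1" using b by (intro divide_left_mono) auto
    then have "b2 / 4^i \<le> b2" by simp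
    then have "norm (w - c) \<le> a" using wa b unfolding ann_def by auto
    then have "z = c + (1/4) *\<^sub>R (w - c)" using sc_near[OF a] z by simp
    then have nz: "norm (z - c) = norm (w - c) / 4" by simp
    have e1: "b1 / 4 ^ Suc i = (b1 / 4^i) / 4" "b2 / 4 ^ Suc i = (b2 / 4^i) / 4" by simp_all
    have "b1 / 4^i / 4 \<le> norm (w - c) / 4" "norm (w - c) / 4 \<le> b2 / 4^i / 4"
      using wa by (auto intro!: divide_right_mono simp: ann_def)
    then show "z \<in> ann c (b1 / 4 ^ Suc i) (b2 / 4 ^ Suc i)"
      unfolding ann_def e1 using nz by simp
  qed
qed

lemma ann_disjoint:
  assumes "0 < b1" "b2 < 4 * b1" "i < j" "0 \<le> b2"
  shows "ann c (b1 / 4^i) (b2 / 4^i) \<inter> ann c (b1 / 4^j) (b2 / 4^j) = {}"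
proof -
  have "(4::real)^(Suc i) \<le> 4^j" using assms(3) by (intro power_increasing) auto
  then have "b2 / 4^j \<le> b2 / 4^(Suc i)"
    using assms by (intro divide_left_mono) auto
  also have "\<dots> = (b2 / 4) / 4^i" by simp
  also have "\<dots> < b1 / 4^i" using assms by (intro divide_strict_right_mono) auto
  finally show ?thesis unfolding ann_def by auto
qed

lemma ann_cball: "0 \<le> b2 \<Longrightarrow> ann c b1 (b2 / 4^i) \<subseteq> cball c (b2 / 2^i)"
proof -
  assume "0 \<le> b2"
  moreover have "(2::real)^i \<le> 4^i" by (intro power_mono) auto
  ultimately have "b2 / 4^i \<le> b2 / 2^i" by (intro divide_left_mono) auto
  then show ?thesis unfolding ann_def by (auto simp: dist_norm norm_minus_commute)
qed


locale chain =
  fixes v :: "'a::euclidean_space \<Rightarrow> 'a" and K :: "'a set" and c :: 'a and \<delta> :: real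
  assumes v: "v \<in> Gb"
    and disj: "\<And>i j. i \<noteq> j \<Longrightarrow> (v ^^ i) ` K \<inter> (v ^^ j) ` K = {}"
    and shrink: "\<And>i. (v ^^ i) ` K \<subseteq> cball c (\<delta> / 2 ^ i)"
    and inball: "\<And>i. (v ^^ i) ` K \<subseteq> ball 0 1"
    and dpos: "0 \<le> \<delta>"
begin

definition iprod :: "(nat \<Rightarrow> 'a \<Rightarrow> 'a) \<Rightarrow> 'a \<Rightarrow> 'a" where
  "iprod y z = (if \<exists>i. z \<in> (v ^^ i) ` K
     then (let i = (SOME i. z \<in> (v ^^ i) ` K) in (v ^^ i) (y i ((inv v ^^ i) z))) else z)"

lemma iprod_in: "z \<in> (v ^^ i) ` K \<Longrightarrow> iprod y z = (v ^^ i) (y i ((inv v ^^ i) z))"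
proof -
  assume z: "z \<in> (v ^^ i) ` K"
  then have s: "z \<in> (v ^^ (SOME i. z \<in> (v ^^ i) ` K)) ` K" by (rule someI)
  have "(SOME i. z \<in> (v ^^ i) ` K) = i"
  proof (rule ccontr)
    assume "(SOME i. z \<in> (v ^^ i) ` K) \<noteq> i"
    from disj[OF this] s z show False by blast
  qed
  then show ?thesis using z unfolding iprod_def by (auto simp: Let_def)
qed

lemma iprod_out: "(\<And>i. z \<notin> (v ^^ i) ` K) \<Longrightarrow> iprod y z = z"
  unfolding iprod_def by auto

lemma vpow_Gb: "v ^^ i \<in> Gb" "inv v ^^ i \<in> Gb"
  using v by (auto intro: Gb_funpow Gb_inv)

lemma vpow_inv1 [simp]: "(inv v ^^ i) ((v ^^ i) x) = x"
  using funpow_inv_l[OF v] .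
lemma vpow_inv2 [simp]: "(v ^^ i) ((inv v ^^ i) x) = x"
  using funpow_inv_r[OF v] .

lemma slot_shift: "(v ^^ Suc i) ` K = v ` (v ^^ i) ` K"
  by (simp add: image_comp)

context
  fixes y :: "nat \<Rightarrow> 'a \<Rightarrow> 'a"
  assumes yG: "\<And>i. y i \<in> Gb" and yfix: "\<And>i z. z \<notin> K \<Longrightarrow> y i z = z"
begin

definition F :: "nat \<Rightarrow> 'a \<Rightarrow> 'a" where "F i = (v ^^ i) \<circ> y i \<circ> (inv v ^^ i)"

lemma F_Gb: "F i \<in> Gb"
  unfolding F_def using vpow_Gb yG by (intro Gb_comp) auto

lemma F_out: "z \<notin> (v ^^ i) ` K \<Longrightarrow> F i z = z"
proof -
  assume z: "z \<notin> (v ^^ i) ` K"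
  have "(inv v ^^ i) z \<notin> K"
  proof
    assume "(inv v ^^ i) z \<in> K"
    then have "(v ^^ i) ((inv v ^^ i) z) \<in> (v ^^ i) ` K" by blast
    with z show False by simp
  qed
  then show ?thesis unfolding F_def using yfix by simp
qed

lemma F_in: "z \<in> (v ^^ i) ` K \<Longrightarrow> F i z \<in> (v ^^ i) ` K"
  using Gb_fixset_in[OF F_Gb F_out] by blast

lemma iprod_in': "z \<in> (v ^^ i) ` K \<Longrightarrow> iprod y z = F i z"
  using iprod_in unfolding F_def by simp

definition Pn :: "nat \<Rightarrow> 'a \<Rightarrow> 'a" where
  "Pn N z = (if \<exists>i<N. z \<in> (v ^^ i) ` K then iprod y z else z)"

lemma Pn_0: "Pn 0 = id" unfolding Pn_def by auto

lemma Pn_Suc: "Pn (Suc N) = Pn N \<circ> F N"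
proof
  fix z
  show "Pn (Suc N) z = (Pn N \<circ> F N) z"
  proof (cases "z \<in> (v ^^ N) ` K")
    case True
    have FN: "F N z \<in> (v ^^ N) ` K" using F_in[OF True] .
    have "\<not> (\<exists>i<N. F N z \<in> (v ^^ i) ` K)"
    proof
      assume "\<exists>i<N. F N z \<in> (v ^^ i) ` K"
      then obtain i where "i < N" "F N z \<in> (v ^^ i) ` K" by blast
      moreover then have "i \<noteq> N" by simp
      ultimately show False using disj[of i N] FN by blast
    qed
    then have "Pn N (F N z) = F N z" unfolding Pn_def by auto
    moreover have "Pn (Suc N) z = F N z" unfolding Pn_def using True iprod_in' by auto
    ultimately show ?thesis by simp
  next
    case False
    then have FNz: "F N z = z" by (rule F_out)
    have eq: "(\<exists>i<Suc N. z \<in> (v ^^ i) ` K) = (\<exists>i<N. z \<in> (v ^^ i) ` K)"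
      using False less_Suc_eq by auto
    show ?thesis by (simp only: Pn_def comp_apply FNz eq)
  qed
qed

lemma Pn_Gb: "Pn N \<in> Gb"
proof (induction N)
  case 0 show ?case unfolding Pn_0 by (rule Gb_id)
next
  case (Suc N) show ?case unfolding Pn_Suc by (rule Gb_comp[OF Suc F_Gb])
qed

lemma Pn_close: "dist (Pn N z) (iprod y z) \<le> 2 * \<delta> / 2 ^ N"
proof (cases "\<exists>i. z \<in> (v ^^ i) ` K")
  case False
  then have "Pn N z = z" "iprod y z = z" unfolding Pn_def by (auto intro: iprod_out)
  then show ?thesis using dpos by simp
next
  case True
  then obtain i where i: "z \<in> (v ^^ i) ` K" by blast
  show ?thesis
  proof (cases "i < N")
    case True
    then have "Pn N z = iprod y z" unfolding Pn_def using i by auto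
    then show ?thesis using dpos by simp
  next
    case False
    have "\<not> (\<exists>j<N. z \<in> (v ^^ j) ` K)"
    proof
      assume "\<exists>j<N. z \<in> (v ^^ j) ` K"
      then obtain j where "j < N" "z \<in> (v ^^ j) ` K" by blast
      moreover then have "j \<noteq> i" using False by simp
      ultimately show False using disj[of j i] i by blast
    qed
    then have "Pn N z = z" unfolding Pn_def by auto
    moreover have "iprod y z = F i z" using iprod_in'[OF i] .
    moreover have "F i z \<in> cball c (\<delta> / 2 ^ i)" "z \<in> cball c (\<delta> / 2 ^ i)"
      using shrink F_in[OF i] i by blast+
    moreover have "dist z (F i z) \<le> dist z c + dist (F i z) c" by (rule dist_triangle2)
    ultimately have "dist (Pn N z) (iprod y z) \<le> 2 * (\<delta> / 2 ^ i)"
      by (simp add: dist_commute)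
    also have "\<dots> \<le> 2 * (\<delta> / 2 ^ N)"
      using False dpos by (auto intro!: divide_left_mono power_increasing)
    finally show ?thesis by simp
  qed
qed

lemma iprod_cont: "continuous_on UNIV (iprod y)"
proof (rule uniform_limit_theorem)
  show "\<forall>\<^sub>F n in sequentially. continuous_on UNIV (Pn n)"
    by (intro always_eventually allI Gb_cont[OF Pn_Gb])
  show "uniform_limit UNIV Pn (iprod y) sequentially"
  proof (rule uniform_limitI)
    fix e :: real assume e: "0 < e"
    have "(\<lambda>n. 2 * \<delta> / 2 ^ n) \<longlonglongrightarrow> 0"
      by (rule LIMSEQ_divide_realpow_zero) (rule one_less_numeral_iff[THEN iffD2], simp)
    then have "\<forall>\<^sub>F n in sequentially. 2 * \<delta> / 2 ^ n < e"
      using e by (rule order_tendstoD)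
    then show "\<forall>\<^sub>F n in sequentially. \<forall>x\<in>UNIV. dist (Pn n x) (iprod y x) < e"
    proof eventually_elim
      case (elim n)
      show ?case
      proof
        fix x show "dist (Pn n x) (iprod y x) < e" using Pn_close[of n x] elim by linarith
      qed
    qed
  qed
qed simp

lemma iprod_Gb: "iprod y \<in> Gb"
proof (rule GbI)
  show "continuous_on UNIV (iprod y)" by (rule iprod_cont)
  show "iprod y x = x" if "1 \<le> norm x" for x
    using inball that by (intro iprod_out) (force simp: subset_iff)
  show "inj (iprod y)"
  proof (rule injI)
    fix a b assume e: "iprod y a = iprod y b"
    show "a = b"
    proof (cases "\<exists>i. a \<in> (v ^^ i) ` K")
      case True
      then obtain i where i: "a \<in> (v ^^ i) ` K" by blast
      have ea: "iprod y a = F i a" using iprod_in'[OF i] .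
      show ?thesis
      proof (cases "\<exists>j. b \<in> (v ^^ j) ` K")
        case True
        then obtain j where j: "b \<in> (v ^^ j) ` K" by blast
        have eb: "iprod y b = F j b" using iprod_in'[OF j] .
        have "i = j"
        proof (rule ccontr)
          assume "i \<noteq> j"
          from disj[OF this] F_in[OF i] F_in[OF j] e ea eb show False by auto
        qed
        then show ?thesis using e ea eb Gb_inj[OF F_Gb] by (metis injD)
      next
        case False
        then have "iprod y b = b" by (auto intro: iprod_out)
        then show ?thesis using e ea F_in[OF i] False by auto
      qed
    next
      case False
      then have ea: "iprod y a = a" by (auto intro: iprod_out)
      show ?thesis
      proof (cases "\<exists>j. b \<in> (v ^^ j) ` K")
        case True
        then obtain j where j: "b \<in> (v ^^ j) ` K" by blast
        have "iprod y b = F j b" using iprod_in'[OF j] .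
        then show ?thesis using e ea F_in[OF j] False by auto
      next
        case False
        then show ?thesis using e ea by (auto intro: iprod_out)
      qed
    qed
  qed
qed

lemma iprod_slot: "z \<in> K \<Longrightarrow> iprod y ((v ^^ k) z) = (v ^^ k) (y k z)"
  by (subst iprod_in[of _ k]) auto

lemma iprod_slot_in: "z \<in> (v ^^ i) ` K \<Longrightarrow> iprod y z \<in> (v ^^ i) ` K"
  using iprod_in' F_in by simp

end

lemma iprod_comm:
  assumes yG: "y0 \<in> Gb" and yfix: "\<And>z. z \<notin> K \<Longrightarrow> y0 z = z"
  shows "iprod (\<lambda>_. y0) (v z) = y0 (v (iprod (\<lambda>_. y0) z))"
proof (cases "\<exists>i. z \<in> (v ^^ i) ` K")
  case True
  then obtain i where i: "z \<in> (v ^^ i) ` K" by blast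
  have vz: "v z \<in> (v ^^ Suc i) ` K" using i slot_shift by blast
  have A: "iprod (\<lambda>_. y0) z = (v ^^ i) (y0 ((inv v ^^ i) z))" using iprod_in[OF i] .
  have iv: "(inv v ^^ Suc i) (v z) = (inv v ^^ i) z"
    by (simp add: funpow_Suc_right del: funpow.simps) (simp add: Gb_inv_l[OF v])
  have L: "iprod (\<lambda>_. y0) (v z) = v ((v ^^ i) (y0 ((inv v ^^ i) z)))"
    using iprod_in[OF vz] iv by simp
  have inK: "iprod (\<lambda>_. y0) z \<in> (v ^^ i) ` K"
    using iprod_slot_in[of "\<lambda>_. y0", OF yG yfix i] by simp
  then have "v (iprod (\<lambda>_. y0) z) \<in> (v ^^ Suc i) ` K" using slot_shift by blast
  then have "v (iprod (\<lambda>_. y0) z) \<notin> K" using disj[of "Suc i" 0] by auto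
  then have "y0 (v (iprod (\<lambda>_. y0) z)) = v (iprod (\<lambda>_. y0) z)" using yfix by blast
  then show ?thesis using L A by simp
next
  case False
  then have Az: "iprod (\<lambda>_. y0) z = z" by (auto intro: iprod_out)
  show ?thesis
  proof (cases "\<exists>j. v z \<in> (v ^^ j) ` K")
    case True
    then obtain j where j: "v z \<in> (v ^^ j) ` K" by blast
    show ?thesis
    proof (cases j)
      case 0
      then have "v z \<in> K" using j by simp
      then show ?thesis using iprod_in[of "v z" 0] Az by simp
    next
      case (Suc j')
      then obtain k where k: "k \<in> K" "v z = v ((v ^^ j') k)" using j by auto
      then have "z = (v ^^ j') k" using Gb_inj[OF v] by (meson injD)
      then show ?thesis using False k by blast
    qed
  next
    case False
    then have "v z \<notin> (v ^^ 0) ` K" by blast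
    then have "v z \<notin> K" by simp
    then show ?thesis using Az False yfix by (auto intro: iprod_out)
  qed
qed

end


fun Eseq :: "(nat \<Rightarrow> real) \<Rightarrow> nat \<Rightarrow> real" where
  "Eseq r 0 = min 1 (1 - r 0)"
| "Eseq r (Suc k) = min (Eseq r k) (1 - r (Suc k))"

definition Tseq :: "(nat \<Rightarrow> real) \<Rightarrow> nat \<Rightarrow> real" where
  "Tseq r k = Eseq r k / 2 ^ Suc k"

fun cseq :: "(nat \<Rightarrow> real) \<Rightarrow> nat \<Rightarrow> real" where
  "cseq r 0 = 1 - Tseq r 0"
| "cseq r (Suc k) = Tseq r k - Tseq r (Suc k)"

definition sseq :: "nat \<Rightarrow> real" where
  "sseq k = 1 - (99/100) ^ (2 ^ k)"

context
  fixes r :: "nat \<Rightarrow> real"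
  assumes r1: "\<And>k. r k < 1"
begin

lemma Eseq_pos: "0 < Eseq r k"
  by (induction k) (use r1 in \<open>auto simp: min_def\<close>)

lemma Eseq_le1: "Eseq r k \<le> 1"
  by (induction k) auto

lemma Eseq_le_r: "Eseq r k \<le> 1 - r k"
  by (cases k) auto

lemma Eseq_dec: "Eseq r (Suc k) \<le> Eseq r k"
  by simp

lemma Tseq_pos: "0 < Tseq r k"
  unfolding Tseq_def using Eseq_pos by simp

lemma Tseq_le: "Tseq r k \<le> 1 / 2 ^ Suc k"
  unfolding Tseq_def using Eseq_le1 by (intro divide_right_mono) auto

lemma cseq_pos: "0 < cseq r k"
proof (cases k)
  case 0
  then show ?thesis using Tseq_le[of 0] by simp
next
  case (Suc j)
  have "Eseq r (Suc j) / 2 ^ Suc (Suc j) \<le> Eseq r j / 2 ^ Suc (Suc j)"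
    using Eseq_dec by (intro divide_right_mono) auto
  also have "\<dots> < Eseq r j / 2 ^ Suc j"
    using Eseq_pos[of j] by (intro divide_strict_left_mono) auto
  finally show ?thesis using Suc by (simp add: Tseq_def)
qed

lemma cseq_partial: "(\<Sum>j<Suc k. cseq r j) = 1 - Tseq r k"
  by (induction k) auto

lemma cseq_sums: "cseq r sums 1"
proof -
  have "(\<lambda>k. Tseq r k) \<longlonglongrightarrow> 0"
  proof (rule tendsto_sandwich[of "\<lambda>_. 0" _ _ "\<lambda>k. 1 / 2 ^ Suc k"])
    show "\<forall>\<^sub>F n in sequentially. 0 \<le> Tseq r n" using Tseq_pos by (simp add: less_imp_le)
    show "\<forall>\<^sub>F n in sequentially. Tseq r n \<le> 1 / 2 ^ Suc n" using Tseq_le by simp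
    show "(\<lambda>k. 1 / 2 ^ Suc k :: real) \<longlonglongrightarrow> 0"
      by (rule LIMSEQ_Suc[OF LIMSEQ_divide_realpow_zero]) simp
  qed simp
  then have "(\<lambda>k. 1 - Tseq r k) \<longlonglongrightarrow> 1 - 0" by (intro tendsto_intros)
  moreover have "(\<lambda>k. \<Sum>j<Suc k. cseq r j) = (\<lambda>k. 1 - Tseq r k)"
    by (simp only: cseq_partial)
  ultimately have "(\<lambda>k. \<Sum>j<Suc k. cseq r j) \<longlonglongrightarrow> 1" by simp
  then show ?thesis unfolding sums_def by (rule LIMSEQ_imp_Suc)
qed

lemma cseq_summable: "summable (cseq r)"
  using cseq_sums sums_summable by blast

lemma cseq_suminf: "(\<Sum>j. cseq r j) = 1"
  using cseq_sums sums_unique by (metis)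

end

lemma sseq_0: "sseq 0 = 1/100" by (simp add: sseq_def)

lemma sseq_lt1: "sseq k < 1" by (simp add: sseq_def)

lemma sseq_mono: "j \<le> k \<Longrightarrow> sseq j \<le> sseq k"
  unfolding sseq_def by (auto intro!: power_decreasing)

lemma sseq_ge: "1/100 \<le> sseq k"
  using sseq_mono[of 0 k] sseq_0 by simp

lemma sseq_exceeds:
  assumes "t < 1" shows "\<exists>k. t < sseq k"
proof -
  obtain n where n: "(99/100::real) ^ n < 1 - t"
    using real_arch_pow_inv[of "1 - t" "99/100"] assms by auto
  have pw: "(99/100::real) ^ (2 ^ n) \<le> (99/100) ^ n"
    by (rule power_decreasing) (auto intro: less_imp_le[OF less_exp])
  have "t < sseq n" unfolding sseq_def using n pw by linarith
  then show ?thesis by blast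
qed

definition lQ :: "real \<Rightarrow> real" where "lQ t = 2 - min 1 t"

lemma lQ_pos: "0 < lQ t" by (simp add: lQ_def)

lemma lQ_mono: "0 \<le> a \<Longrightarrow> a < b \<Longrightarrow> a * lQ a < b * lQ b"
proof -
  assume a: "0 \<le> a" and ab: "a < b"
  show ?thesis
  proof (cases "b \<le> 1")
    case True
    then have "min 1 a = a" "min 1 b = b" using ab by auto
    moreover have "0 < (b - a) * (2 - a - b)" using ab True by (intro mult_pos_pos) auto
    ultimately show ?thesis unfolding lQ_def by (simp add: algebra_simps)
  next
    case False
    then have mb: "min 1 b = 1" by simp
    show ?thesis
    proof (cases "a \<le> 1")
      case True
      then have "min 1 a = a" by simp
      moreover have "0 \<le> (1 - a) * (1 - a)" by simp
      ultimately have "a * lQ a \<le> 1" unfolding lQ_def by (simp add: algebra_simps)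
      then show ?thesis using False mb unfolding lQ_def by simp
    next
      case False
      then show ?thesis using ab mb unfolding lQ_def by simp
    qed
  qed
qed

lemma sseq_Suc: "sseq (Suc k) = sseq k * lQ (sseq k)"
proof -
  have "min 1 (sseq k) = sseq k" using sseq_lt1[of k] by simp
  moreover have "(99/100::real) ^ (2 ^ Suc k) = ((99/100) ^ (2 ^ k))^2"
    by (simp add: power_mult[symmetric] mult.commute)
  ultimately show ?thesis unfolding lQ_def sseq_def by (simp add: power2_eq_square algebra_simps)
qed

definition Q0 :: "'a::euclidean_space \<Rightarrow> 'a" where "Q0 = rad 0 lQ"

lemma Q0_Gb: "Q0 \<in> Gb"
  unfolding Q0_def
proof (rule rad_Gb)
  show "continuous_on UNIV lQ" unfolding lQ_def by (intro continuous_intros)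
  show "\<And>r. 0 \<le> r \<Longrightarrow> 0 < lQ r" by (rule lQ_pos)
  show "\<And>r s. 0 \<le> r \<Longrightarrow> r < s \<Longrightarrow> r * lQ r < s * lQ s" by (rule lQ_mono)
  show "\<And>x::'a. 1 \<le> norm x \<Longrightarrow> lQ (norm (x - 0)) = 1" by (simp add: lQ_def)
qed

lemma Q0_norm: "norm (Q0 z) = norm z * lQ (norm z)"
  using rad_norm[of lQ 0 z] lQ_pos unfolding Q0_def by simp

lemma Q0_pow: "1/100 < norm z \<Longrightarrow> sseq k < norm ((Q0 ^^ k) z)"
proof (induction k)
  case 0 then show ?case by (simp add: sseq_0)
next
  case (Suc k)
  have "sseq (Suc k) = sseq k * lQ (sseq k)" by (rule sseq_Suc)
  also have "\<dots> < norm ((Q0 ^^ k) z) * lQ (norm ((Q0 ^^ k) z))"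
    using Suc sseq_ge[of k] by (intro lQ_mono) auto
  also have "\<dots> = norm ((Q0 ^^ Suc k) z)" by (simp add: Q0_norm)
  finally show ?case .
qed


definition lP :: "(nat \<Rightarrow> real) \<Rightarrow> real \<Rightarrow> real" where
  "lP r t = max 1 t * (\<Sum>j. cseq r j / max (sseq j) t)"

lemma ratio_le1: "0 < (s::real) \<Longrightarrow> 0 \<le> a \<Longrightarrow> a / max s a \<le> 1"
proof -
  assume s: "0 < s" and a: "0 \<le> a"
  have "0 < max s a" "a \<le> max s a" using s by auto
  then show ?thesis by (simp add: divide_le_eq_1)
qed

lemma ratio_mono:
  fixes s a b :: real
  assumes s: "0 < s" and a: "0 \<le> a" and ab: "a \<le> b"
  shows "a / max s a \<le> b / max s b"
proof (cases "b \<le> s")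
  case True
  then have "max s a = s" "max s b = s" using ab by auto
  then show ?thesis using ab s by (simp add: divide_right_mono)
next
  case False
  then have mb: "b / max s b = 1" using s by simp
  have "a / max s a \<le> 1" using ratio_le1[OF s a] .
  then show ?thesis using mb by simp
qed

lemma ratio_strict:
  fixes s a b :: real
  assumes s: "0 < s" and a: "0 \<le> a" and ab: "a < b" and as: "a < s"
  shows "a / max s a < b / max s b"
proof (cases "b \<le> s")
  case True
  then have "max s a = s" "max s b = s" using ab by auto
  then show ?thesis using ab s by (simp add: divide_strict_right_mono)
next
  case False
  then have mb: "b / max s b = 1" using s by simp
  have "max s a = s" using as by simp
  then have "a / max s a < 1" using as s by simp
  then show ?thesis using mb by simp
qed

context
  fixes r :: "nat \<Rightarrow> real"
  assumes r1: "\<And>k. r k < 1"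
begin

lemmas cpos = cseq_pos[of r, OF r1] and csum = cseq_summable[of r, OF r1]
  and csuminf = cseq_suminf[of r, OF r1] and cpart = cseq_partial[of r, OF r1]
  and Epos = Eseq_pos[of r, OF r1]

lemma sseq_pos: "0 < sseq j" using sseq_ge[of j] by simp

lemma term_bound: "norm (cseq r j / max (sseq j) t) \<le> 100 * cseq r j"
proof -
  have m: "1/100 \<le> max (sseq j) t" using sseq_ge[of j] by simp
  have c: "0 < cseq r j" using cpos by blast
  have "norm (cseq r j / max (sseq j) t) = cseq r j / max (sseq j) t"
    using c m by simp
  also have "\<dots> \<le> cseq r j / (1/100)"
    using c m by (intro divide_left_mono) auto
  finally show ?thesis by simp
qed

lemma summ_terms: "summable (\<lambda>j. cseq r j / max (sseq j) t)"
  by (rule summable_comparison_test[OF _ summable_mult[OF csum, of 100]])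
     (use term_bound in auto)

lemma summ_terms2: "summable (\<lambda>j. cseq r j * (t / max (sseq j) t))"
  using summable_mult[OF summ_terms[of t], of t] by (simp add: algebra_simps)

lemma S_cont: "continuous_on UNIV (\<lambda>t. \<Sum>j. cseq r j / max (sseq j) t)"
proof (rule uniform_limit_theorem)
  show "uniform_limit UNIV (\<lambda>n t. \<Sum>j<n. cseq r j / max (sseq j) t) (\<lambda>t. \<Sum>j. cseq r j / max (sseq j) t) sequentially"
    by (rule Weierstrass_m_test[OF _ summable_mult[OF csum, of 100]])
       (rule term_bound)
  show "\<forall>\<^sub>F n in sequentially. continuous_on UNIV (\<lambda>t. \<Sum>j<n. cseq r j / max (sseq j) t)"
  proof (intro always_eventually allI continuous_on_sum)
    fix n j
    have "max (sseq j) t \<noteq> 0" for t using sseq_pos[of j] by linarith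
    then show "continuous_on UNIV (\<lambda>t. cseq r j / max (sseq j) t)"
      by (intro continuous_intros) auto
  qed
qed simp

lemma lP_cont: "continuous_on UNIV (lP r)"
  unfolding lP_def by (intro continuous_intros S_cont)

lemma S_pos: "0 < (\<Sum>j. cseq r j / max (sseq j) t)"
proof (rule suminf_pos[OF summ_terms])
  fix j
  have "0 < max (sseq j) t" using sseq_pos[of j] by linarith
  then show "0 < cseq r j / max (sseq j) t" using cpos[of j] by simp
qed

lemma lP_pos: "0 < lP r t"
  unfolding lP_def using S_pos[of t] by simp

lemma psi_small:
  assumes "0 \<le> t" "t \<le> 1"
  shows "t * lP r t = (\<Sum>j. cseq r j * (t / max (sseq j) t))"
proof -
  have "t * lP r t = t * (\<Sum>j. cseq r j / max (sseq j) t)" unfolding lP_def using assms by simp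
  also have "\<dots> = (\<Sum>j. t * (cseq r j / max (sseq j) t))"
    by (rule suminf_mult[OF summ_terms, symmetric])
  finally show ?thesis by (simp add: algebra_simps)
qed

lemma lP_big:
  assumes "1 \<le> t" shows "lP r t = 1"
proof -
  have "max (sseq j) t = t" for j using sseq_lt1[of j] assms by simp
  then have "(\<Sum>j. cseq r j / max (sseq j) t) = (\<Sum>j. cseq r j / t)" by simp
  also have "\<dots> = (\<Sum>j. cseq r j) / t" by (rule suminf_divide[OF csum])
  also have "\<dots> = 1 / t" using csuminf by simp
  finally show ?thesis unfolding lP_def using assms by simp
qed

lemma psi_le1: "0 \<le> t \<Longrightarrow> t \<le> 1 \<Longrightarrow> t * lP r t \<le> 1"
proof -
  assume t: "0 \<le> t" "t \<le> 1"
  have "(\<Sum>j. cseq r j * (t / max (sseq j) t)) \<le> (\<Sum>j. cseq r j)"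
  proof (rule suminf_le[OF _ summ_terms2 csum])
    fix j
    have "t / max (sseq j) t \<le> 1" using ratio_le1[OF sseq_pos t(1)] .
    then have "cseq r j * (t / max (sseq j) t) \<le> cseq r j * 1"
      using cpos[of j] by (intro mult_left_mono) auto
    then show "cseq r j * (t / max (sseq j) t) \<le> cseq r j" by simp
  qed
  then show ?thesis using psi_small[OF t] csuminf by simp
qed

lemma psi_mono:
  assumes a: "0 \<le> a" and ab: "a < b"
  shows "a * lP r a < b * lP r b"
proof (cases "b \<le> 1")
  case True
  obtain k where k: "a < sseq k" using sseq_exceeds[of a] ab True by auto
  let ?f = "\<lambda>j. cseq r j * (a / max (sseq j) a)"
  let ?g = "\<lambda>j. cseq r j * (b / max (sseq j) b)"
  have "0 < (\<Sum>j. ?g j - ?f j)"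
  proof (rule suminf_pos2)
    show "summable (\<lambda>j. ?g j - ?f j)" by (intro summable_diff summ_terms2)
    show "0 \<le> ?g j - ?f j" for j
    proof -
      have "?f j \<le> ?g j"
        using ratio_mono[OF sseq_pos a less_imp_le[OF ab], of j] cpos[of j]
        by (intro mult_left_mono) auto
      then show ?thesis by simp
    qed
    show "0 < ?g k - ?f k"
    proof -
      have "?f k < ?g k"
        using ratio_strict[OF sseq_pos a ab k] cpos[of k]
        by (intro mult_strict_left_mono) auto
      then show ?thesis by simp
    qed
  qed
  also have "(\<Sum>j. ?g j - ?f j) = (\<Sum>j. ?g j) - (\<Sum>j. ?f j)"
    by (rule suminf_diff[OF summ_terms2 summ_terms2, symmetric])
  finally show ?thesis using psi_small[OF a] psi_small[of b] a ab True by simp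
next
  case False
  then have bb: "b * lP r b = b" using lP_big[of b] by simp
  moreover have "a * lP r a < b"
  proof (cases "a \<le> 1")
    case True then show ?thesis using psi_le1[OF a True] False by simp
  next
    case False then show ?thesis using lP_big[of a] ab by simp
  qed
  then show ?thesis using bb by linarith
qed

lemma psi_node: "r k \<le> sseq k * lP r (sseq k)"
proof -
  let ?f = "\<lambda>j. cseq r j * (sseq k / max (sseq j) (sseq k))"
  have "(\<Sum>j<Suc k. cseq r j) = (\<Sum>j<Suc k. ?f j)"
  proof (rule sum.cong)
    fix j assume "j \<in> {..<Suc k}"
    then have "sseq j \<le> sseq k" by (intro sseq_mono) auto
    then have "max (sseq j) (sseq k) = sseq k" by simp
    then show "cseq r j = ?f j" using sseq_pos[of k] by simp
  qed simp
  also have "\<dots> \<le> (\<Sum>j. ?f j)"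
  proof (rule sum_le_suminf[OF summ_terms2])
    fix j
    have "0 \<le> sseq k / max (sseq j) (sseq k)" using sseq_pos[of k] sseq_pos[of j] by simp
    then show "0 \<le> ?f j" using cpos[of j] by (intro mult_nonneg_nonneg) auto
  qed simp
  also have "\<dots> = sseq k * lP r (sseq k)"
    using psi_small[of "sseq k"] sseq_pos[of k] sseq_lt1[of k] by simp
  finally have "1 - Tseq r k \<le> sseq k * lP r (sseq k)" using cpart by simp
  moreover have "Tseq r k \<le> 1 - r k"
  proof -
    have "(1::real) \<le> 2 ^ Suc k" by (rule one_le_power) simp
    then have "Eseq r k / 2 ^ Suc k \<le> Eseq r k / 1" using Epos[of k]
      by (intro divide_left_mono) auto
    then have "Tseq r k \<le> Eseq r k" unfolding Tseq_def by simp
    then show ?thesis using Eseq_le_r[of r k, OF r1] by simp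
  qed
  ultimately show ?thesis by simp
qed

definition P :: "'a::euclidean_space \<Rightarrow> 'a" where "P = rad 0 (lP r)"

lemma P_Gb: "P \<in> Gb"
  unfolding P_def
proof (rule rad_Gb)
  show "continuous_on UNIV (lP r)" by (rule lP_cont)
  show "\<And>t. 0 \<le> t \<Longrightarrow> 0 < lP r t" by (rule lP_pos)
  show "\<And>a b. 0 \<le> a \<Longrightarrow> a < b \<Longrightarrow> a * lP r a < b * lP r b" by (rule psi_mono)
  show "\<And>x::'a. 1 \<le> norm x \<Longrightarrow> lP r (norm (x - 0)) = 1" by (simp add: lP_big)
qed

lemma P_norm: "norm (P z) = norm z * lP r (norm z)"
  using rad_norm[of "lP r" 0 z] lP_pos unfolding P_def by simp

lemma P_big: "sseq k < norm w \<Longrightarrow> r k < norm (P w)"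
proof -
  assume w: "sseq k < norm w"
  have "r k \<le> sseq k * lP r (sseq k)" by (rule psi_node)
  also have "\<dots> < norm w * lP r (norm w)"
    using w sseq_pos[of k] by (intro psi_mono) auto
  finally show ?thesis using P_norm[of w] by simp
qed

end


definition wordl :: "('a \<Rightarrow> 'a) \<Rightarrow> ('a \<Rightarrow> 'a) \<Rightarrow> ('a \<Rightarrow> 'a) \<Rightarrow> ('a \<Rightarrow> 'a) \<Rightarrow> ('a \<Rightarrow> 'a)
   \<Rightarrow> ('a \<Rightarrow> 'a) \<Rightarrow> ('a \<Rightarrow> 'a) \<Rightarrow> ('a \<Rightarrow> 'a) \<Rightarrow> ('a \<Rightarrow> 'a) \<Rightarrow> ('a \<Rightarrow> 'a) \<Rightarrow> nat \<Rightarrow> ('a \<Rightarrow> 'a) list" where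
  "wordl Pp Pq Qp Qq Vp Vq Wp Wq Hp Hq k = [Pp] @ replicate k Qp @ replicate k Wq @ [Hp] @ replicate k Wp @ [Vp]
     @ replicate k Wq @ [Hq] @ replicate k Wp @ [Vq] @ replicate k Qq @ [Pq]"

lemma wordl_length: "length (wordl Pp Pq Qp Qq Vp Vq Wp Wq Hp Hq k) = 6 * k + 6"
  by (simp add: wordl_def)

lemma wordl_set: "set (wordl Pp Pq Qp Qq Vp Vq Wp Wq Hp Hq k) \<subseteq> {Pp, Pq, Qp, Qq, Vp, Vq, Wp, Wq, Hp, Hq}"
  by (auto simp: wordl_def)

lemma foldr_comp_append: "foldr (\<circ>) (xs @ ys) id = foldr (\<circ>) xs id \<circ> foldr (\<circ>) ys id"
  by (induction xs) (auto simp: o_assoc)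

lemma foldr_comp_rep: "foldr (\<circ>) (replicate k f) id = f ^^ k"
  by (induction k) auto

lemma wordl_eval: "foldr (\<circ>) (wordl Pp Pq Qp Qq Vp Vq Wp Wq Hp Hq k) id =
   Pp \<circ> Qp ^^ k \<circ> Wq ^^ k \<circ> Hp \<circ> Wp ^^ k \<circ> Vp \<circ> Wq ^^ k \<circ> Hq \<circ> Wp ^^ k \<circ> Vq \<circ> Qq ^^ k \<circ> Pq"
  unfolding wordl_def foldr_comp_append foldr_comp_rep by (simp add: o_assoc)

lemma ann_from_ball:
  fixes c d :: "'a::euclidean_space"
  shows "cball c R \<subseteq> ann d (norm (c - d) - R) (norm (c - d) + R)"
proof
  fix z assume "z \<in> cball c R"
  then have z: "norm (z - c) \<le> R" by (simp add: dist_norm norm_minus_commute)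
  have "norm (z - d) \<le> norm (z - c) + norm (c - d)" using norm_triangle_ineq[of "z - c" "c - d"] by simp
  moreover have "norm (c - d) \<le> norm (c - z) + norm (z - d)" using norm_triangle_ineq[of "c - z" "z - d"] by simp
  moreover have "norm (c - z) = norm (z - c)" by (rule norm_minus_commute)
  ultimately show "z \<in> ann d (norm (c - d) - R) (norm (c - d) + R)" using z unfolding ann_def by auto
qed

lemma cball_in_ball: "norm (c::'a::euclidean_space) + R < 1 \<Longrightarrow> cball c R \<subseteq> ball 0 1"
proof
  fix z assume "norm c + R < 1" "z \<in> cball c R"
  moreover have "norm z \<le> norm c + norm (z - c)" using norm_triangle_ineq[of c "z - c"] by simp
  ultimately show "z \<in> ball 0 1" by (simp add: dist_norm norm_minus_commute)
qed

lemma ann_sub_cball: "ann c a b \<subseteq> cball c b"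
  by (auto simp: ann_def dist_norm norm_minus_commute)

lemma Gb_fixset_surj:
  assumes "f \<in> Gb" "\<And>x. x \<notin> K \<Longrightarrow> f x = x" "w \<in> K" shows "\<exists>z\<in>K. f z = w"
proof -
  have "f (inv f w) = w" using assms(1) by simp
  moreover have "inv f w \<in> K"
  proof (rule ccontr)
    assume "inv f w \<notin> K"
    then have "f (inv f w) = inv f w" using assms(2) by blast
    then show False using \<open>f (inv f w) = w\<close> \<open>inv f w \<notin> K\<close> assms(3) by simp
  qed
  ultimately show ?thesis by blast
qed

lemma chain_from_ann:
  fixes c :: "'a::euclidean_space"
  assumes a: "0 < a" and b: "0 < b1" "b2 \<le> a" "0 \<le> b2" "b2 < 4 * b1"
    and K: "K \<subseteq> ann c b1 b2" and cG: "norm c + 7 * a / 4 \<le> 1" and cb: "norm c + b2 < 1"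
  shows "chain (sc c a) K c b2"
proof
  show "sc c a \<in> Gb" using sc_Gb[OF a cG] .
  have img: "(sc c a ^^ i) ` K \<subseteq> ann c (b1 / 4^i) (b2 / 4^i)" for i
    by (rule sc_chain[OF a b(1-3) K])
  show "(sc c a ^^ i) ` K \<inter> (sc c a ^^ j) ` K = {}" if "i \<noteq> j" for i j
  proof (cases "i < j")
    case True
    then show ?thesis using img[of i] img[of j] ann_disjoint[OF b(1) b(4) True b(3), of c] by blast
  next
    case False
    then have "j < i" using that by simp
    then show ?thesis using img[of i] img[of j] ann_disjoint[OF b(1) b(4) _ b(3), of j i c] by blast
  qed
  show "(sc c a ^^ i) ` K \<subseteq> cball c (b2 / 2 ^ i)" for i
    using img[of i] ann_cball[OF b(3), of c "b1 / 4^i" i] by blast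
  show "(sc c a ^^ i) ` K \<subseteq> ball 0 1" for i
  proof -
    have "(b2 / 4^i) \<le> b2 / 1" using b by (intro divide_left_mono) auto
    then have "ann c (b1 / 4^i) (b2 / 4^i) \<subseteq> cball c b2"
      using ann_sub_cball[of c "b1 / 4^i" "b2 / 4^i"] by (auto simp: subset_iff)
    then show ?thesis using img[of i] cball_in_ball[OF cb] by blast
  qed
  show "0 \<le> b2" by (rule b(3))
qed


lemma Rn_distort:
  fixes g :: "nat \<Rightarrow> 'a::euclidean_space \<Rightarrow> 'a" and r :: "nat \<Rightarrow> real"
  assumes gG: "\<And>k. g k \<in> Gb" and r1: "\<And>k. r k < 1" and gfix: "\<And>k z. r k < norm z \<Longrightarrow> g k z = z"
  shows "\<exists>Pp Qp Vp Wp Hp. Pp \<in> Gb \<and> Qp \<in> Gb \<and> Vp \<in> Gb \<and> Wp \<in> Gb \<and> Hp \<in> Gb \<and>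
     (\<forall>k. g k = foldr (\<circ>) (wordl Pp (inv Pp) Qp (inv Qp) Vp (inv Vp) Wp (inv Wp) Hp (inv Hp) k) id)"
proof -
  obtain e :: 'a where e: "e \<in> Basis" using nonempty_Basis by blast
  then have ne: "norm e = 1" by simp
  define c1 :: 'a where "c1 = (3/100) *\<^sub>R e"
  define c2 :: 'a where "c2 = (23/100) *\<^sub>R e"
  have nc1: "norm c1 = 3/100" unfolding c1_def using ne by simp
  have nc2: "norm c2 = 23/100" unfolding c2_def using ne by simp
  have nc12: "norm (c1 - c2) = 20/100"
  proof -
    have "c1 - c2 = (3/100 - 23/100) *\<^sub>R e" by (simp only: c1_def c2_def scaleR_diff_left)
    then show ?thesis using ne by simp
  qed
  define K :: "'a set" where "K = cball 0 (1/100)"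
  define K' :: "'a set" where "K' = cball c1 (7/100)"
  define V where "V = sc c1 (4/100)"
  define W where "W = sc c2 (28/100)"
  have KK': "K \<subseteq> K'"
  proof
    fix z assume "z \<in> K"
    then have "norm z \<le> 1/100" by (simp add: K_def)
    moreover have "norm (z - c1) \<le> norm z + norm c1" by (rule norm_triangle_ineq4)
    ultimately show "z \<in> K'" using nc1 by (simp add: K'_def dist_norm norm_minus_commute)
  qed
  have Kann: "K \<subseteq> ann c1 (2/100) (4/100)"
    using ann_from_ball[of 0 "1/100" c1] nc1 by (simp add: K_def)
  have K'ann: "K' \<subseteq> ann c2 (13/100) (27/100)"
    using ann_from_ball[of c1 "7/100" c2] nc12 by (simp add: K'_def)
  interpret ch1: chain V K c1 "4/100"
    unfolding V_def by (rule chain_from_ann[OF _ _ _ _ _ Kann]) (use nc1 in auto)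
  interpret ch2: chain W K' c2 "27/100"
    unfolding W_def by (rule chain_from_ann[OF _ _ _ _ _ K'ann]) (use nc2 in auto)
  have VG: "V \<in> Gb" by (rule ch1.v)
  have WG: "W \<in> Gb" by (rule ch2.v)
  have Vfix: "V z = z" if "z \<notin> K'" for z
  proof -
    have "7/100 < norm (z - c1)" using that by (simp add: K'_def dist_norm norm_minus_commute)
    then show ?thesis unfolding V_def by (intro sc_far) auto
  qed
  define Pm where "Pm = (P r :: 'a \<Rightarrow> 'a)"
  have PG: "Pm \<in> Gb" unfolding Pm_def by (rule P_Gb[OF r1])
  have QG: "(Q0 :: 'a \<Rightarrow> 'a) \<in> Gb" by (rule Q0_Gb)
  define y where "y k = (inv Q0 ^^ k) \<circ> inv Pm \<circ> g k \<circ> Pm \<circ> (Q0 ^^ k)" for k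
  have yG: "y k \<in> Gb" for k
    unfolding y_def using PG QG gG
    by (intro Gb_comp Gb_funpow Gb_inv) auto
  have yfix: "y k z = z" if "z \<notin> K" for k z
  proof -
    have "1/100 < norm z" using that by (simp add: K_def)
    then have "sseq k < norm ((Q0 ^^ k) z)" by (rule Q0_pow)
    then have "r k < norm (Pm ((Q0 ^^ k) z))" unfolding Pm_def by (rule P_big[OF r1])
    then have "g k (Pm ((Q0 ^^ k) z)) = Pm ((Q0 ^^ k) z)" by (rule gfix)
    then show ?thesis unfolding y_def using PG funpow_inv_l[OF QG] by simp
  qed
  define A where "A k = ch1.iprod (\<lambda>_. y k)" for k
  have AG: "A k \<in> Gb" for k
    unfolding A_def by (rule ch1.iprod_Gb) (use yG yfix in auto)
  have Afix: "A k z = z" if "z \<notin> K'" for k z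
  proof -
    have "z \<notin> (V ^^ i) ` K" for i
    proof
      assume "z \<in> (V ^^ i) ` K"
      then have "z \<in> cball c1 (4/100 / 2^i)" using ch1.shrink by blast
      then have d: "dist c1 z \<le> 4/100 / 2^i" unfolding mem_cball .
      have "4/100 / 2^i \<le> (4/100::real) / 1" by (intro divide_left_mono) auto
      then have "dist c1 z \<le> 7/100" using d by linarith
      then have "z \<in> K'" unfolding K'_def mem_cball .
      then show False using that by simp
    qed
    then show ?thesis unfolding A_def by (rule ch1.iprod_out)
  qed
  have Acomm: "A k (V z) = y k (V (A k z))" for k z
    unfolding A_def by (rule ch1.iprod_comm[OF yG yfix])
  define H where "H = ch2.iprod A"
  have HG: "H \<in> Gb" unfolding H_def by (rule ch2.iprod_Gb) (use AG Afix in auto)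
  have Hslot: "H ((W ^^ k) z) = (W ^^ k) (A k z)" if "z \<in> K'" for k z
    unfolding H_def by (rule ch2.iprod_slot[OF AG Afix that])
  define Phi where "Phi k = (inv W ^^ k) \<circ> H \<circ> (W ^^ k)" for k
  define Psi where "Psi k = (inv W ^^ k) \<circ> inv H \<circ> (W ^^ k)" for k
  have PhiG: "Phi k \<in> Gb" for k
    unfolding Phi_def using WG HG by (intro Gb_comp Gb_funpow Gb_inv) auto
  have PhiPsi: "Phi k (Psi k x) = x" for k x
    unfolding Phi_def Psi_def using funpow_inv_l[OF WG] funpow_inv_r[OF WG] HG by simp
  have PhiK: "Phi k z = A k z" if "z \<in> K'" for k z
    unfolding Phi_def using Hslot[OF that] funpow_inv_l[OF WG] by simp
  have Phiout: "Phi k z \<notin> K'" if "z \<notin> K'" for k z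
  proof
    assume "Phi k z \<in> K'"
    then obtain z0 where z0: "z0 \<in> K'" "A k z0 = Phi k z" using Gb_fixset_surj[OF AG Afix] by blast
    then have "Phi k z0 = Phi k z" using PhiK by simp
    then have "z0 = z" using Gb_inj[OF PhiG] by (meson injD)
    then show False using z0 that by simp
  qed
  have star: "y k (V (Phi k z)) = Phi k (V z)" for k z
  proof (cases "z \<in> K'")
    case True
    have AK: "A k z \<in> K'" by (rule Gb_fixset_in[OF AG Afix True])
    have VK: "V z \<in> K'" by (rule Gb_fixset_in[OF VG Vfix True])
    show ?thesis using PhiK[OF True] PhiK[OF VK] Acomm by simp
  next
    case False
    have o: "Phi k z \<notin> K'" by (rule Phiout[OF False])
    then have "Phi k z \<notin> K" using KK' by blast
    then show ?thesis using Vfix[OF False] Vfix[OF o] yfix by simp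
  qed
  have yeq: "y k x = Phi k (V (Psi k (inv V x)))" for k x
    using star[of k "Psi k (inv V x)"] PhiPsi VG by simp
  have geq: "g k x = Pm ((Q0 ^^ k) (y k ((inv Q0 ^^ k) (inv Pm x))))" for k x
    unfolding y_def using PG funpow_inv_r[OF QG] by simp
  have "\<forall>k. g k = foldr (\<circ>) (wordl Pm (inv Pm) Q0 (inv Q0) V (inv V) W (inv W) H (inv H) k) id"
  proof
    fix k
    show "g k = foldr (\<circ>) (wordl Pm (inv Pm) Q0 (inv Q0) V (inv V) W (inv W) H (inv H) k) id"
      unfolding wordl_eval
    proof
      fix x
      show "g k x = (Pm \<circ> Q0 ^^ k \<circ> inv W ^^ k \<circ> H \<circ> W ^^ k \<circ> V \<circ> inv W ^^ k \<circ> inv H \<circ> W ^^ k \<circ> inv V \<circ>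
          inv Q0 ^^ k \<circ> inv Pm) x"
        using geq[of k x] yeq[of k] unfolding Phi_def Psi_def by simp
    qed
  qed
  then show ?thesis using PG QG VG WG HG by blast
qed


lemma no_inj_sphere_punct:
  fixes f :: "'a::euclidean_space \<Rightarrow> 'a"
  assumes cont: "continuous_on (sphere 0 1) f" and inj: "inj_on f (sphere 0 1)"
    and q: "q \<in> sphere 0 1" and im: "f ` sphere 0 1 \<subseteq> sphere 0 1 - {q}"
  shows False
proof -
  obtain T :: "'a set" where T: "affine T" "aff_dim T = int DIM('a) - 1"
  proof -
    have a: "affine (UNIV::'a set)" by simp
    have "- 1 \<le> int DIM('a) - 1" by simp
    moreover have "int DIM('a) - 1 \<le> aff_dim (UNIV::'a set)" by (simp add: aff_dim_UNIV)
    ultimately obtain T :: "'a set" where "affine T" "aff_dim T = int DIM('a) - 1"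
      using choose_affine_subset[OF a] by metis
    then show thesis using that by blast
  qed
  have "(sphere (0::'a) 1 - {q}) homeomorphic T"
    by (rule homeomorphic_punctured_sphere_affine) (use q T in auto)
  then obtain k k' where hk: "homeomorphism (sphere (0::'a) 1 - {q}) T k k'"
    by (auto simp: homeomorphic_def)
  define F where "F = k \<circ> f"
  have contF: "continuous_on (sphere 0 1) F"
    unfolding F_def
    by (rule continuous_on_compose[OF cont]) (meson continuous_on_subset hk homeomorphism_cont1 im)
  have injF: "inj_on F (sphere 0 1)"
    unfolding F_def
    using inj im hk unfolding inj_on_def homeomorphism_def
    by (metis (no_types, lifting) comp_apply image_subset_iff)
  have imF: "F \<in> sphere 0 1 \<rightarrow> T"
  proof
    fix x :: 'a assume "x \<in> sphere 0 1"
    then have "f x \<in> sphere 0 1 - {q}" using im by blast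
    then show "F x \<in> T" unfolding F_def using hk unfolding homeomorphism_def by auto
  qed
  have op: "openin (top_of_set T) (F ` sphere 0 1)"
    by (rule invariance_of_domain_sphere_affine_set[OF contF injF imF _ T(1), where a=0]) (use T in auto)
  have cp: "compact (F ` sphere 0 1)"
    by (rule compact_continuous_image[OF contF]) simp
  have cl: "closedin (top_of_set T) (F ` sphere 0 1)"
    using cp imF by (intro closed_subset compact_imp_closed) auto
  obtain e :: 'a where e: "e \<in> Basis" using nonempty_Basis by blast
  then have es: "e \<in> sphere 0 1" "- e \<in> sphere 0 1" by auto
  have ne: "F ` sphere 0 1 \<noteq> {}" using es by auto
  have "connected T" using T(1) by (simp add: affine_imp_convex convex_connected)
  then have eqT: "F ` sphere 0 1 = T" using op cl ne by (meson connected_clopen)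
  then have "bounded T" using cp compact_imp_bounded by auto
  then have "aff_dim T \<le> 0" using affine_bounded_eq_lowdim[OF T(1)] by simp
  moreover have "aff_dim T \<ge> 0" using T(2) DIM_positive[where 'a='a] by linarith
  ultimately have "aff_dim T = 0" by simp
  then obtain a where "T = {a}" using aff_dim_eq_0 by blast
  then have "F e = a" "F (- e) = a" using eqT es by (metis image_eqI singletonD)+
  then have "F e = F (- e)" by simp
  then have "e = - e" using injF es by (meson inj_onD)
  then have "e = 0" by (metis equation_minus_iff scaleR_2 scaleR_eq_0_iff zero_neq_numeral add_eq_0_iff2 real_vector.scale_eq_0_iff eq_neg_iff_add_eq_0 double_zero_sym)
  then show False using e by simp
qed


lemma ball_setup:
  fixes B :: "'m::{t2_space, second_countable_topology} set" and \<phi> :: "'m \<Rightarrow> real^'n::finite"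
  assumes man: "topological_manifold TYPE('m) TYPE('n)" and oB: "open B"
    and hom: "homeomorphism (closure B) (cball 0 1) \<phi> \<psi>"
    and fr: "frontier B homeomorphic (sphere (0::real^'n) 1)"
  shows "\<phi> ` B = ball 0 1 \<and> \<phi> ` frontier B = sphere 0 1"
proof -
  have hB: "\<forall>x\<in>closure B. \<psi> (\<phi> x) = x" "\<phi> ` closure B = cball 0 1" "continuous_on (closure B) \<phi>"
      "\<forall>y\<in>cball 0 1. \<phi> (\<psi> y) = y" "\<psi> ` cball 0 1 = closure B" "continuous_on (cball 0 1) \<psi>"
    using hom unfolding homeomorphism_def by auto
  have Bc: "B \<subseteq> closure B" by (rule closure_subset)
  have frB: "frontier B = closure B - B" using oB by (simp add: frontier_def interior_open)
  have inball: "\<phi> x \<in> ball 0 1" if x: "x \<in> B" for x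
  proof -
    obtain U V where U: "open U" "x \<in> U" and V: "open (V :: (real^'n) set)" "U homeomorphic V"
      using man unfolding topological_manifold_def by blast
    then obtain chi chi' where hc: "homeomorphism U V chi chi'" by (auto simp: homeomorphic_def)
    define W where "W = U \<inter> B"
    have "openin (top_of_set U) W" unfolding W_def using oB by (rule openin_open_Int)
    then have "openin (top_of_set V) (chi ` W)" by (rule homeomorphism_imp_open_map[OF hc])
    then have oW: "open (chi ` W)" using V(1) by (rule openin_open_trans)
    have WU: "W \<subseteq> U" unfolding W_def by auto
    have WB: "W \<subseteq> closure B" unfolding W_def using Bc by auto
    have hc': "\<forall>x\<in>U. chi' (chi x) = x" "chi ` U = V" "continuous_on V chi'" "\<forall>y\<in>V. chi (chi' y) = y"
      "chi' ` V = U"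
      using hc unfolding homeomorphism_def by auto
    have im: "(\<phi> \<circ> chi') ` (chi ` W) = \<phi> ` W"
      using hc'(1) WU by (force simp: image_comp image_iff)
    have cont: "continuous_on (chi ` W) (\<phi> \<circ> chi')"
    proof (rule continuous_on_compose)
      show "continuous_on (chi ` W) chi'" using hc'(3) hc'(2) WU by (meson continuous_on_subset image_mono)
      have "chi' ` chi ` W = W" using hc'(1) WU by (force simp: image_comp image_iff)
      then show "continuous_on (chi' ` chi ` W) \<phi>" using hB(3) WB continuous_on_subset by metis
    qed
    have inj: "inj_on (\<phi> \<circ> chi') (chi ` W)"
    proof (rule inj_onI)
      fix a b assume ab: "a \<in> chi ` W" "b \<in> chi ` W" "(\<phi> \<circ> chi') a = (\<phi> \<circ> chi') b"
      then obtain a' b' where a'b': "a' \<in> W" "b' \<in> W" "a = chi a'" "b = chi b'" by auto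
      then have "chi' a = a'" "chi' b = b'" using hc'(1) WU by auto
      then have "\<phi> a' = \<phi> b'" using ab(3) by simp
      then have "a' = b'" using hB(1) a'b' WB by (metis subsetD)
      then show "a = b" using a'b' by simp
    qed
    have "open ((\<phi> \<circ> chi') ` (chi ` W))"
      by (rule invariance_of_domain_gen[OF oW cont inj]) simp
    then have oPW: "open (\<phi> ` W)" using im by simp
    have "\<phi> ` W \<subseteq> cball 0 1" using hB(2) WB by auto
    then have "\<phi> ` W \<subseteq> interior (cball 0 1)" using oPW interior_maximal by blast
    then have "\<phi> ` W \<subseteq> ball 0 1" by simp
    moreover have "x \<in> W" unfolding W_def using x U by auto
    ultimately show ?thesis by blast
  qed
  have sph1: "sphere 0 1 \<subseteq> \<phi> ` frontier B"
  proof
    fix y :: "real^'n" assume y: "y \<in> sphere 0 1"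
    then have "y \<in> cball 0 1" by auto
    then have "y \<in> \<phi> ` closure B" using hB(2) by simp
    then obtain x where x: "x \<in> closure B" "y = \<phi> x" by blast
    have "x \<notin> B" using inball x y by fastforce
    then show "y \<in> \<phi> ` frontier B" using x frB by auto
  qed
  have sph2: "\<phi> ` frontier B \<subseteq> sphere 0 1"
  proof (rule ccontr)
    assume "\<not> \<phi> ` frontier B \<subseteq> sphere 0 1"
    then obtain p where p: "p \<in> frontier B" "\<phi> p \<notin> sphere 0 1" by (meson image_subset_iff)
    obtain h h' where hh: "homeomorphism (frontier B) (sphere (0::real^'n) 1) h h'"
      using fr by (auto simp: homeomorphic_def)
    have hh': "\<forall>x\<in>frontier B. h' (h x) = x" "h ` frontier B = sphere 0 1" "continuous_on (frontier B) h"
      using hh unfolding homeomorphism_def by auto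
    have psiS: "\<psi> ` sphere 0 1 \<subseteq> frontier B"
    proof
      fix z assume "z \<in> \<psi> ` sphere 0 1"
      then obtain y :: "real^'n" where y: "y \<in> sphere 0 1" "z = \<psi> y" by auto
      then obtain x where x: "x \<in> frontier B" "y = \<phi> x" using sph1 by auto
      then have "\<psi> y = x" using hB(1) frB by auto
      then show "z \<in> frontier B" using x y by simp
    qed
    define f where "f = h \<circ> \<psi>"
    have contf: "continuous_on (sphere 0 1) f"
      unfolding f_def
    proof (rule continuous_on_compose)
      show "continuous_on (sphere 0 1) \<psi>" using hB(6) by (rule continuous_on_subset) auto
      show "continuous_on (\<psi> ` sphere 0 1) h" using hh'(3) psiS by (rule continuous_on_subset)
    qed
    have psi_inj: "y1 = y2" if "y1 \<in> cball 0 1" "y2 \<in> cball 0 1" "\<psi> y1 = \<psi> y2" for y1 y2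
      using hB(4) that by metis
    have injf: "inj_on f (sphere 0 1)"
    proof (rule inj_onI)
      fix a b :: "real^'n" assume ab: "a \<in> sphere 0 1" "b \<in> sphere 0 1" "f a = f b"
      then have "h' (h (\<psi> a)) = h' (h (\<psi> b))" unfolding f_def by simp
      then have "\<psi> a = \<psi> b" using hh'(1) psiS ab by (metis image_subset_iff)
      then show "a = b" using psi_inj ab by auto
    qed
    have pS: "h p \<in> sphere 0 1" using hh'(2) p by blast
    have imf: "f ` sphere 0 1 \<subseteq> sphere 0 1 - {h p}"
    proof
      fix z assume "z \<in> f ` sphere 0 1"
      then obtain y :: "real^'n" where y: "y \<in> sphere 0 1" "z = h (\<psi> y)" unfolding f_def by auto
      have yf: "\<psi> y \<in> frontier B" using psiS y by blast
      have "z \<in> sphere 0 1" using hh'(2) y yf by blast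
      moreover have "z \<noteq> h p"
      proof
        assume "z = h p"
        then have "\<psi> y = p" using hh'(1) yf p y by metis
        then have "\<phi> p = y" using hB(4) y by auto
        then show False using p y by simp
      qed
      ultimately show "z \<in> sphere 0 1 - {h p}" by simp
    qed
    show False by (rule no_inj_sphere_punct[OF contf injf pS imf])
  qed
  have "\<phi> ` B = ball 0 1"
  proof
    show "\<phi> ` B \<subseteq> ball 0 1" using inball by auto
    show "ball 0 1 \<subseteq> \<phi> ` B"
    proof
      fix y :: "real^'n" assume y: "y \<in> ball 0 1"
      then have "y \<in> cball 0 1" by auto
      then have "y \<in> \<phi> ` closure B" using hB(2) by simp
      then obtain x where x: "x \<in> closure B" "y = \<phi> x" by blast
      have "x \<notin> frontier B" using sph2 x y by fastforce
      then have "x \<in> B" using x frB by auto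
      then show "y \<in> \<phi> ` B" using x by auto
    qed
  qed
  then show ?thesis using sph1 sph2 by auto
qed


definition alex :: "('a::euclidean_space \<Rightarrow> 'a) \<Rightarrow> real \<Rightarrow> 'a \<Rightarrow> 'a" where
  "alex g t y = y + t *\<^sub>R (g (y /\<^sub>R t) - y /\<^sub>R t)"

lemma alex_0: "alex g 0 = id"
  by (auto simp: alex_def)

lemma alex_1: "alex g 1 = g"
  by (auto simp: alex_def)

lemma alex_pos: "0 < t \<Longrightarrow> alex g t y = t *\<^sub>R g (y /\<^sub>R t)"
  by (simp add: alex_def algebra_simps)

lemma Gb_disp: "g \<in> Gb \<Longrightarrow> norm (g z - z) \<le> 2"
proof (cases "1 \<le> norm z")
  case True
  assume "g \<in> Gb" then have "g z = z" using True Gb_fix by blast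
  then show ?thesis by simp
next
  case False
  assume g: "g \<in> Gb"
  then have "norm (g z) \<le> 1" using False Gb_cball by fastforce
  moreover have "norm (g z - z) \<le> norm (g z) + norm z" by (rule norm_triangle_ineq4)
  ultimately show ?thesis using False by linarith
qed

lemma alex_Gb:
  assumes g: "g \<in> Gb" and t: "0 \<le> t" "t \<le> 1"
  shows "alex g t \<in> Gb"
proof (cases "t = 0")
  case True then show ?thesis by (simp add: alex_0 Gb_id)
next
  case False
  then have tp: "0 < t" using t by simp
  have eq: "alex g t = (\<lambda>y. t *\<^sub>R g (y /\<^sub>R t))" using alex_pos[OF tp] by auto
  show ?thesis unfolding eq
  proof (rule GbI)
    show "continuous_on UNIV (\<lambda>y. t *\<^sub>R g (y /\<^sub>R t))"
      by (intro continuous_intros continuous_on_compose2[OF Gb_cont[OF g]]) auto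
    show "inj (\<lambda>y. t *\<^sub>R g (y /\<^sub>R t))"
    proof (rule injI)
      fix a b assume "t *\<^sub>R g (a /\<^sub>R t) = t *\<^sub>R g (b /\<^sub>R t)"
      then have "g (a /\<^sub>R t) = g (b /\<^sub>R t)" using tp by simp
      then have "a /\<^sub>R t = b /\<^sub>R t" using Gb_inj[OF g] by (meson injD)
      then show "a = b" using tp by simp
    qed
    show "t *\<^sub>R g (x /\<^sub>R t) = x" if "1 \<le> norm x" for x
    proof -
      have "1 \<le> norm x / t" using that t tp by (simp add: le_divide_eq)
      moreover have "norm (x /\<^sub>R t) = norm x / t" using tp by (simp add: divide_inverse_commute)
      ultimately have "1 \<le> norm (x /\<^sub>R t)" by simp
      then have "g (x /\<^sub>R t) = x /\<^sub>R t" using Gb_fix[OF g] by blast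
      then show ?thesis using tp by simp
    qed
  qed
qed

lemma alex_cont:
  fixes g :: "'a::euclidean_space \<Rightarrow> 'a"
  assumes g: "g \<in> Gb"
  shows "continuous_on UNIV (\<lambda>p::real \<times> 'a. alex g (fst p) (snd p))"
proof -
  have gc: "isCont g z" for z using Gb_cont[OF g, of UNIV] by (simp add: continuous_on_eq_continuous_at)
  have "isCont (\<lambda>p::real \<times> 'a. alex g (fst p) (snd p)) p0" for p0
  proof (cases "fst p0 = 0")
    case False
    have "isCont (\<lambda>p::real \<times> 'a. snd p /\<^sub>R fst p) p0"
      using False by (intro continuous_intros) auto
    then have "isCont (\<lambda>p::real \<times> 'a. g (snd p /\<^sub>R fst p)) p0"
      using gc by (rule isCont_o2)
    then show ?thesis unfolding alex_def
      using False by (intro continuous_intros) auto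
  next
    case True
    obtain t0 y0 where p0: "p0 = (t0, y0)" by (cases p0)
    with True have t0: "t0 = 0" by simp
    have lim0: "((\<lambda>p::real \<times> 'a. norm (snd p - y0) + 2 * \<bar>fst p\<bar>) \<longlongrightarrow> 0) (at p0)"
    proof -
      have "((\<lambda>p::real \<times> 'a. norm (snd p - y0) + 2 * \<bar>fst p\<bar>) \<longlongrightarrow> norm (snd p0 - y0) + 2 * \<bar>fst p0\<bar>) (at p0)"
        by (intro tendsto_intros)
      then show ?thesis using p0 t0 by simp
    qed
    have "((\<lambda>p. alex g (fst p) (snd p) - y0) \<longlongrightarrow> 0) (at p0)"
    proof (rule tendsto_0_le[OF lim0, where K=1])
      show "\<forall>\<^sub>F p in at p0. norm (alex g (fst p) (snd p) - y0) \<le> norm (norm (snd p - y0) + 2 * \<bar>fst p\<bar>) * 1"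
      proof (rule always_eventually, rule allI)
        fix p :: "real \<times> 'a"
        have "alex g (fst p) (snd p) - y0 = (snd p - y0) + fst p *\<^sub>R (g (snd p /\<^sub>R fst p) - snd p /\<^sub>R fst p)"
          by (simp add: alex_def)
        then have "norm (alex g (fst p) (snd p) - y0) \<le> norm (snd p - y0) + \<bar>fst p\<bar> * norm (g (snd p /\<^sub>R fst p) - snd p /\<^sub>R fst p)"
          by (metis norm_scaleR norm_triangle_ineq)
        also have "\<dots> \<le> norm (snd p - y0) + \<bar>fst p\<bar> * 2"
          using Gb_disp[OF g] by (intro add_left_mono mult_left_mono) auto
        finally show "norm (alex g (fst p) (snd p) - y0) \<le> norm (norm (snd p - y0) + 2 * \<bar>fst p\<bar>) * 1"
          by simp
      qed
    qed
    then have "((\<lambda>p. alex g (fst p) (snd p)) \<longlongrightarrow> y0) (at p0)"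
      by (simp add: LIM_zero_iff)
    moreover have "alex g (fst p0) (snd p0) = y0" using p0 t0 by (simp add: alex_0)
    ultimately show ?thesis unfolding isCont_def by simp
  qed
  then show ?thesis by (simp add: continuous_on_eq_continuous_at)
qed


locale sball =
  fixes B :: "'m::topological_space set" and \<phi> :: "'m \<Rightarrow> 'a::euclidean_space" and \<psi> :: "'a \<Rightarrow> 'm"
  assumes oB: "open B" and hom: "homeomorphism (closure B) (cball 0 1) \<phi> \<psi>"
    and phiB: "\<phi> ` B = ball 0 1" and phiF: "\<phi> ` frontier B = sphere 0 1"
begin

lemma psi_phi: "x \<in> closure B \<Longrightarrow> \<psi> (\<phi> x) = x"
  using hom unfolding homeomorphism_def by auto
lemma phi_psi: "y \<in> cball 0 1 \<Longrightarrow> \<phi> (\<psi> y) = y"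
  using hom unfolding homeomorphism_def by auto
lemma phi_cb: "x \<in> closure B \<Longrightarrow> \<phi> x \<in> cball 0 1"
  using hom unfolding homeomorphism_def by auto
lemma psi_cl: "y \<in> cball 0 1 \<Longrightarrow> \<psi> y \<in> closure B"
  using hom unfolding homeomorphism_def by auto
lemma phi_cont: "continuous_on (closure B) \<phi>"
  using hom unfolding homeomorphism_def by auto
lemma psi_cont: "continuous_on (cball 0 1) \<psi>"
  using hom unfolding homeomorphism_def by auto
lemma frB: "frontier B = closure B - B"
  using oB by (simp add: frontier_def interior_open)
lemma phi_fr: "x \<in> closure B \<Longrightarrow> x \<notin> B \<Longrightarrow> norm (\<phi> x) = 1"
  using phiF frB by auto
lemma phi_in: "x \<in> B \<Longrightarrow> norm (\<phi> x) < 1"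
  using phiB by auto
lemma psi_sph: "norm y = 1 \<Longrightarrow> \<psi> y \<notin> B"
proof
  assume y: "norm y = 1" and yB: "\<psi> y \<in> B"
  have "norm (\<phi> (\<psi> y)) < 1" by (rule phi_in[OF yB])
  then show False using phi_psi[of y] y by simp
qed
lemma closed_compl: "closed (- B)" using oB by (simp add: closed_Compl)
lemma B_cl: "B \<subseteq> closure B" by (rule closure_subset)

definition Tr :: "('a \<Rightarrow> 'a) \<Rightarrow> 'm \<Rightarrow> 'm" where
  "Tr g x = (if x \<in> closure B then \<psi> (g (\<phi> x)) else x)"

lemma Tr_cont:
  assumes g: "g \<in> Gb" shows "continuous_on UNIV (Tr g)"
proof -
  have c1: "continuous_on (closure B) (\<lambda>x. \<psi> (g (\<phi> x)))"
  proof (rule continuous_on_compose2[OF psi_cont])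
    show "continuous_on (closure B) (\<lambda>x. g (\<phi> x))"
      by (rule continuous_on_compose2[OF Gb_cont[OF g] phi_cont]) auto
    show "(\<lambda>x. g (\<phi> x)) ` closure B \<subseteq> cball 0 1"
      using phi_cb Gb_cball[OF g] by auto
  qed
  have "continuous_on (closure B \<union> - B) (\<lambda>x. if x \<in> closure B then \<psi> (g (\<phi> x)) else x)"
  proof (rule continuous_on_cases[OF closed_closure closed_compl c1 continuous_on_id], intro allI impI)
    fix x assume "x \<in> closure B \<and> x \<notin> closure B \<or> x \<in> - B \<and> x \<in> closure B"
    then have x: "x \<in> closure B" "x \<notin> B" by auto
    then have "g (\<phi> x) = \<phi> x" using phi_fr Gb_fix[OF g] by simp
    then show "\<psi> (g (\<phi> x)) = x" using psi_phi x by simp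
  qed
  moreover have "closure B \<union> - B = UNIV" using B_cl by auto
  ultimately show ?thesis unfolding Tr_def[abs_def] by simp
qed

lemma Tr_comp: "g1 \<in> Gb \<Longrightarrow> g2 \<in> Gb \<Longrightarrow> Tr (g1 \<circ> g2) = Tr g1 \<circ> Tr g2"
proof
  fix x assume g: "g1 \<in> Gb" "g2 \<in> Gb"
  show "Tr (g1 \<circ> g2) x = (Tr g1 \<circ> Tr g2) x"
  proof (cases "x \<in> closure B")
    case True
    have c: "g2 (\<phi> x) \<in> cball 0 1" using phi_cb[OF True] Gb_cball[OF g(2)] by simp
    then have "\<psi> (g2 (\<phi> x)) \<in> closure B" by (rule psi_cl)
    then show ?thesis using True phi_psi[OF c] by (simp add: Tr_def)
  next
    case False then show ?thesis by (simp add: Tr_def)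
  qed
qed

lemma Tr_id: "Tr id = id"
  by (auto simp: Tr_def psi_phi)

lemma Tr_Homeo: assumes g: "g \<in> Gb" shows "Tr g \<in> Homeo"
proof -
  have gi: "inv g \<in> Gb" by (rule Gb_inv[OF g])
  have e1: "Tr g \<circ> Tr (inv g) = id"
    using Tr_comp[OF g gi] Tr_id Gb_inv_r[OF g] by (metis comp_def eq_id_iff)
  have e2: "Tr (inv g) \<circ> Tr g = id"
    using Tr_comp[OF gi g] Tr_id Gb_inv_l[OF g] by (metis comp_def eq_id_iff)
  have "homeomorphism UNIV UNIV (Tr g) (Tr (inv g))"
    unfolding homeomorphism_def using Tr_cont[OF g] Tr_cont[OF gi] e1 e2
    by (auto simp: pointfree_idE) (metis comp_apply id_apply range_eqI e2)+
  then show ?thesis unfolding Homeo_def by blast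
qed

lemma Tr_inj: assumes "g1 \<in> Gb" "g2 \<in> Gb" "Tr g1 = Tr g2" shows "g1 = g2"
proof
  fix z
  show "g1 z = g2 z"
  proof (cases "1 \<le> norm z")
    case True then show ?thesis using assms Gb_fix by metis
  next
    case False
    then have zc: "z \<in> cball 0 1" by simp
    have x: "\<psi> z \<in> closure B" by (rule psi_cl[OF zc])
    have "\<psi> (g1 z) = \<psi> (g2 z)" using fun_cong[OF assms(3), of "\<psi> z"] x phi_psi[OF zc] by (simp add: Tr_def)
    moreover have "g1 z \<in> cball 0 1" "g2 z \<in> cball 0 1" using zc Gb_cball assms by auto
    ultimately show ?thesis using phi_psi by metis
  qed
qed

lemma Tr_foldr: "set l \<subseteq> Gb \<Longrightarrow> Tr (foldr (\<circ>) l id) = foldr (\<circ>) (map Tr l) id \<and> foldr (\<circ>) l id \<in> Gb"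
proof (induction l)
  case Nil
  have "Tr (\<lambda>a. a) = (\<lambda>a. a)" by (auto simp: Tr_def psi_phi)
  moreover have "(\<lambda>a::'a. a) \<in> Gb" by (rule GbI) auto
  ultimately show ?case by (simp add: id_def)
next
  case (Cons a l)
  have a: "a \<in> Gb" using Cons.prems by simp
  have sl: "set l \<subseteq> Gb" using Cons.prems by simp
  have IH: "Tr (foldr (\<circ>) l id) = foldr (\<circ>) (map Tr l) id" "foldr (\<circ>) l id \<in> Gb"
    using Cons.IH[OF sl] unfolding comp_def[abs_def] id_def by auto
  have e1: "foldr (\<circ>) (a # l) id = a \<circ> foldr (\<circ>) l id" by simp
  have e2: "foldr (\<circ>) (map Tr (a # l)) id = Tr a \<circ> foldr (\<circ>) (map Tr l) id" by simp
  show ?case unfolding e1 e2 Tr_comp[OF a IH(2)] IH(1) using Gb_comp[OF a IH(2)] by (rule conjI[OF refl])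
qed

end


context sball
begin

lemma J_cont:
  assumes g: "g \<in> Gb"
  shows "continuous_on ({0..1} \<times> UNIV) (\<lambda>p::real \<times> 'm. Tr (alex g (fst p)) (snd p))"
proof -
  let ?S = "{0..1::real} \<times> closure B" and ?T = "{0..1::real} \<times> - B"
  have c1: "continuous_on ?S (\<lambda>p. \<psi> (alex g (fst p) (\<phi> (snd p))))"
  proof (rule continuous_on_compose2[OF psi_cont])
    have "continuous_on ?S (\<lambda>p. (fst p, \<phi> (snd p)))"
    proof (intro continuous_on_Pair continuous_on_fst continuous_on_id)
      show "continuous_on ?S (\<lambda>p. \<phi> (snd p))"
        by (rule continuous_on_compose2[OF phi_cont continuous_on_snd]) auto
    qed
    then show "continuous_on ?S (\<lambda>p. alex g (fst p) (\<phi> (snd p)))"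
      using continuous_on_compose2[OF alex_cont[OF g], of ?S "\<lambda>p. (fst p, \<phi> (snd p))"] by simp
    show "(\<lambda>p. alex g (fst p) (\<phi> (snd p))) ` ?S \<subseteq> cball 0 1"
    proof clarsimp
      fix t :: real and x :: 'm assume t: "0 \<le> t" "t \<le> 1" and x: "x \<in> closure B"
      show "norm (alex g t (\<phi> x)) \<le> 1"
        using Gb_cball[OF alex_Gb[OF g t]] phi_cb[OF x] by simp
    qed
  qed
  have "continuous_on (?S \<union> ?T) (\<lambda>p. if snd p \<in> closure B then \<psi> (alex g (fst p) (\<phi> (snd p))) else snd p)"
  proof (rule continuous_on_cases)
    show "closed ?S" by (intro closed_Times) auto
    show "closed ?T" using closed_compl by (intro closed_Times) auto
    show "continuous_on ?T snd" by (rule continuous_on_snd[OF continuous_on_id])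
    show "\<forall>p. p \<in> ?S \<and> snd p \<notin> closure B \<or> p \<in> ?T \<and> snd p \<in> closure B \<longrightarrow>
        \<psi> (alex g (fst p) (\<phi> (snd p))) = snd p"
    proof (intro allI impI)
      fix p :: "real \<times> 'm"
      assume "p \<in> ?S \<and> snd p \<notin> closure B \<or> p \<in> ?T \<and> snd p \<in> closure B"
      then have p: "snd p \<in> closure B" "snd p \<notin> B" "0 \<le> fst p" "fst p \<le> 1"
        by (auto simp: mem_Times_iff)
      have "norm (\<phi> (snd p)) = 1" using phi_fr p by simp
      then have "alex g (fst p) (\<phi> (snd p)) = \<phi> (snd p)"
        using Gb_fix[OF alex_Gb[OF g p(3,4)]] by simp
      then show "\<psi> (alex g (fst p) (\<phi> (snd p))) = snd p" using psi_phi p by simp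
    qed
  qed (rule c1)
  moreover have "?S \<union> ?T = {0..1} \<times> UNIV" using B_cl by auto
  ultimately show ?thesis unfolding Tr_def by simp
qed

lemma gamma_co:
  assumes g: "g \<in> Gb"
  shows "continuous_map (top_of_set {0..1}) compact_open_topology (\<lambda>t. Tr (alex g t))"
  unfolding compact_open_topology_def
proof (rule continuous_on_generated_topo_iff[THEN iffD2], intro conjI allI impI)
  fix U :: "('m \<Rightarrow> 'm) set"
  assume "U \<in> {{f. f ` K \<subseteq> U} |K U. compact K \<and> open U}"
  then obtain K Ou where KO: "U = {f. f ` K \<subseteq> Ou}" "compact K" "open Ou" by blast
  let ?J = "\<lambda>p::real \<times> 'm. Tr (alex g (fst p)) (snd p)"
  obtain W where W: "open W" "W \<inter> ({0..1} \<times> UNIV) = ?J -` Ou \<inter> ({0..1} \<times> UNIV)"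
    using J_cont[OF g] KO(3) unfolding continuous_on_open_invariant by blast
  show "openin (top_of_set {0..1}) ((\<lambda>t. Tr (alex g t)) -` U \<inter> topspace (top_of_set {0..1}))"
  proof (subst openin_subopen, intro ballI)
    fix t0 assume t0: "t0 \<in> (\<lambda>t. Tr (alex g t)) -` U \<inter> topspace (top_of_set {0..1::real})"
    then have t01: "t0 \<in> {0..1}" and img: "Tr (alex g t0) ` K \<subseteq> Ou" using KO(1) by auto
    have "{t0} \<times> K \<subseteq> W"
    proof
      fix p assume "p \<in> {t0} \<times> K"
      then have "fst p = t0" "snd p \<in> K" by auto
      then have "p \<in> ?J -` Ou \<inter> ({0..1} \<times> UNIV)" using img t01 by (auto simp: mem_Times_iff)
      then show "p \<in> W" using W(2) by blast
    qed
    then obtain X0 where X0: "t0 \<in> X0" "open X0" "X0 \<times> K \<subseteq> W"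
      using Elementary_Topology.tube_lemma[OF KO(2) W(1)] by blast
    show "\<exists>T. openin (top_of_set {0..1}) T \<and> t0 \<in> T \<and> T \<subseteq> (\<lambda>t. Tr (alex g t)) -` U \<inter> topspace (top_of_set {0..1})"
    proof (intro exI conjI)
      show "openin (top_of_set {0..1}) ({0..1} \<inter> X0)" using X0(2) by (rule openin_open_Int)
      show "t0 \<in> {0..1} \<inter> X0" using t01 X0(1) by simp
      show "{0..1} \<inter> X0 \<subseteq> (\<lambda>t. Tr (alex g t)) -` U \<inter> topspace (top_of_set {0..1})"
      proof
        fix t assume t: "t \<in> {0..1} \<inter> X0"
        have "Tr (alex g t) ` K \<subseteq> Ou"
        proof
          fix z assume "z \<in> Tr (alex g t) ` K"
          then obtain x where x: "x \<in> K" "z = Tr (alex g t) x" by auto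
          then have "(t, x) \<in> W" using X0(3) t by blast
          then have "(t, x) \<in> ?J -` Ou" using W(2) t by blast
          then show "z \<in> Ou" using x by simp
        qed
        then show "t \<in> (\<lambda>t. Tr (alex g t)) -` U \<inter> topspace (top_of_set {0..1})" using t KO(1) by simp
      qed
    qed
  qed
next
  have "UNIV \<in> {{f::'m \<Rightarrow> 'm. f ` K \<subseteq> U} |K U. compact K \<and> open U}"
    by (rule CollectI, rule exI[of _ "{}"], rule exI[of _ UNIV]) auto
  then show "(\<lambda>t. Tr (alex g t)) ` topspace (top_of_set {0..1}) \<subseteq> \<Union> {{f. f ` K \<subseteq> U} |K U. compact K \<and> open U}"
    by blast
qed

lemma Tr_Homeo0:
  assumes g: "g \<in> Gb" shows "Tr g \<in> Homeo0"
proof -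
  let ?X = "subtopology compact_open_topology (Homeo :: ('m \<Rightarrow> 'm) set)"
  have cm: "continuous_map (top_of_set {0..1}) ?X (\<lambda>t. Tr (alex g t))"
    unfolding continuous_map_in_subtopology
  proof
    show "continuous_map (top_of_set {0..1}) compact_open_topology (\<lambda>t. Tr (alex g t))" by (rule gamma_co[OF g])
    show "(\<lambda>t. Tr (alex g t)) \<in> topspace (top_of_set {0..1}) \<rightarrow> Homeo"
      using alex_Gb[OF g] Tr_Homeo by auto
  qed
  have "connected {0..1::real}" by (rule connected_Icc)
  then have "connectedin (top_of_set {0..1}) {0..1::real}"
    by (simp add: connectedin_subtopology)
  then have cT: "connectedin ?X ((\<lambda>t. Tr (alex g t)) ` {0..1})"
    by (rule connectedin_continuous_map_image[OF cm])
  have e0: "(\<lambda>t. Tr (alex g t)) 0 = id" by (simp only: alex_0 Tr_id)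
  have i0: "id \<in> (\<lambda>t. Tr (alex g t)) ` {0..1}"
  proof (rule image_eqI[where f="\<lambda>t. Tr (alex g t)" and x=0])
    show "id = (\<lambda>t. Tr (alex g t)) 0" by (simp only: e0)
  qed simp
  have e1: "(\<lambda>t. Tr (alex g t)) 1 = Tr g" by (simp only: alex_1)
  have i1: "Tr g \<in> (\<lambda>t. Tr (alex g t)) ` {0..1}"
  proof (rule image_eqI[where f="\<lambda>t. Tr (alex g t)" and x=1])
    show "Tr g = (\<lambda>t. Tr (alex g t)) 1" by (simp only: e1)
  qed simp
  have "connected_component_of ?X id (Tr g)"
    unfolding connected_component_of_def
    by (rule exI[of _ "(\<lambda>t. Tr (alex g t)) ` {0..1}"]) (intro conjI cT i0 i1)
  then show ?thesis unfolding Homeo0_def by simp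
qed

end


lemma Homeo0_Homeo: "f \<in> Homeo0 \<Longrightarrow> f \<in> Homeo"
proof -
  assume "f \<in> Homeo0"
  then have "f \<in> topspace (subtopology compact_open_topology Homeo)"
    unfolding Homeo0_def by (rule subsetD[OF connected_component_of_subset_topspace])
  then show ?thesis by simp
qed

lemma compact_ball_bound:
  fixes S :: "'a::euclidean_space set"
  assumes "compact S" "S \<subseteq> ball 0 1"
  shows "\<exists>r<1. \<forall>z\<in>S. norm z \<le> r"
proof (cases "S = {}")
  case True then show ?thesis by (intro exI[of _ 0]) auto
next
  case False
  have "compact (norm ` S)" using assms(1) by (intro compact_continuous_image continuous_intros)
  moreover have "norm ` S \<noteq> {}" using False by simp
  ultimately obtain m where m: "m \<in> norm ` S" "\<forall>y\<in>norm ` S. y \<le> m"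
    using compact_attains_sup by blast
  then have "m < 1" using assms(2) by auto
  then show ?thesis using m by auto
qed

context sball
begin

lemma from_f:
  assumes f: "f \<in> Homeo0" and sf: "support f \<subseteq> B"
  shows "\<exists>g r. g \<in> Gb \<and> r < 1 \<and> (\<forall>z. r < norm z \<longrightarrow> g z = z) \<and> Tr g = f"
proof -
  obtain f' where hf: "homeomorphism UNIV UNIV f f'" using Homeo0_Homeo[OF f] unfolding Homeo_def by blast
  have fc0: "continuous_on UNIV f" by (rule homeomorphism_cont1[OF hf])
  have fc: "continuous_on S f" for S by (rule continuous_on_subset[OF fc0 subset_UNIV])
  have finj: "inj f"
  proof (rule injI)
    fix a b assume "f a = f b"
    then have "f' (f a) = f' (f b)" by simp
    then show "a = b" using homeomorphism_apply1[OF hf, of a] homeomorphism_apply1[OF hf, of b] by simp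
  qed
  have ffix: "f x = x" if "x \<notin> B" for x
  proof (rule ccontr)
    assume "f x \<noteq> x"
    then have "x \<in> {x. f x \<noteq> x}" by simp
    then have "x \<in> support f" unfolding support_def using closure_subset[of "{x. f x \<noteq> x}"] by (rule rev_subsetD)
    then show False using sf that by blast
  qed
  have fB: "f x \<in> B" if "x \<in> B" for x
  proof (rule ccontr)
    assume "f x \<notin> B"
    then have "f (f x) = f x" by (rule ffix)
    then have "f x = x" using finj by (meson injD)
    then show False using \<open>f x \<notin> B\<close> that by simp
  qed
  have fcl: "f x \<in> closure B" if "x \<in> closure B" for x
    using fB ffix B_cl that by (cases "x \<in> B") auto
  define g where "g z = (if norm z \<le> 1 then \<phi> (f (\<psi> z)) else z)" for z
  have sph: "\<phi> (f (\<psi> z)) = z" if "norm z = 1" for z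
  proof -
    have "\<psi> z \<notin> B" using psi_sph[OF that] .
    then show ?thesis using ffix phi_psi that by simp
  qed
  have gG: "g \<in> Gb"
  proof (rule GbI)
    have c1: "continuous_on (cball 0 1) (\<lambda>z. \<phi> (f (\<psi> z)))"
    proof (rule continuous_on_compose2[OF phi_cont])
      show "continuous_on (cball 0 1) (\<lambda>z. f (\<psi> z))"
        by (rule continuous_on_compose2[OF fc psi_cont]) auto
      show "(\<lambda>z. f (\<psi> z)) ` cball 0 1 \<subseteq> closure B" using psi_cl fcl by auto
    qed
    have cT: "closed {z::'a. 1 \<le> norm z}"
    proof -
      have "{z::'a. 1 \<le> norm z} = - ball 0 1" by auto
      then show ?thesis by (simp add: closed_Compl)
    qed
    have "continuous_on (cball 0 1 \<union> {z. 1 \<le> norm z}) (\<lambda>z. if z \<in> cball 0 1 then \<phi> (f (\<psi> z)) else z)"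
      by (rule continuous_on_cases[OF closed_cball cT c1 continuous_on_id]) (auto intro: sph)
    moreover have "cball 0 1 \<union> {z::'a. 1 \<le> norm z} = UNIV" by auto
    moreover have "(\<lambda>z. if z \<in> cball 0 1 then \<phi> (f (\<psi> z)) else z) = g"
      unfolding g_def by auto
    ultimately show "continuous_on UNIV g" by metis
    show "g x = x" if "1 \<le> norm x" for x
      using sph[of x] that unfolding g_def by (cases "norm x = 1") auto
    show "inj g"
    proof (rule injI)
      fix a b assume e: "g a = g b"
      have inc: "g z \<in> cball 0 1" if "norm z \<le> 1" for z
        using that phi_cb psi_cl fcl unfolding g_def by auto
      show "a = b"
      proof (cases "norm a \<le> 1"; cases "norm b \<le> 1")
        assume a: "norm a \<le> 1" and b: "norm b \<le> 1"
        then have "\<phi> (f (\<psi> a)) = \<phi> (f (\<psi> b))" using e unfolding g_def by simp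
        then have "f (\<psi> a) = f (\<psi> b)" using psi_phi fcl psi_cl a b by (metis mem_cball_0)
        then have "\<psi> a = \<psi> b" using finj by (meson injD)
        then show "a = b" using phi_psi a b by (metis mem_cball_0)
      next
        assume a: "norm a \<le> 1" and b: "\<not> norm b \<le> 1"
        then show "a = b" using e inc[OF a] unfolding g_def by simp
      next
        assume a: "\<not> norm a \<le> 1" and b: "norm b \<le> 1"
        then show "a = b" using e inc[OF b] unfolding g_def by simp
      next
        assume a: "\<not> norm a \<le> 1" and b: "\<not> norm b \<le> 1"
        then show "a = b" using e unfolding g_def by simp
      qed
    qed
  qed
  have Trg: "Tr g = f"
  proof
    fix x show "Tr g x = f x"
    proof (cases "x \<in> closure B")
      case True
      then have "norm (\<phi> x) \<le> 1" using phi_cb by simp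
      then have "g (\<phi> x) = \<phi> (f x)" unfolding g_def using psi_phi True by simp
      then show ?thesis using True psi_phi fcl by (simp add: Tr_def)
    next
      case False
      then have "x \<notin> B" using B_cl by blast
      then have "f x = x" by (rule ffix)
      then show ?thesis using False by (simp add: Tr_def)
    qed
  qed
  have cl: "compact (closure B)"
  proof -
    have "closure B = \<psi> ` cball 0 1" using hom unfolding homeomorphism_def by auto
    then show ?thesis using compact_continuous_image[OF psi_cont compact_cball] by simp
  qed
  have csupp: "compact (support f)"
  proof -
    have "support f \<subseteq> closure B" using sf B_cl by blast
    moreover have "closed (support f)" unfolding support_def by simp
    ultimately show ?thesis using cl by (metis compact_Int_closed inf.absorb2)
  qed
  have "compact (\<phi> ` support f)"
    using csupp sf B_cl by (intro compact_continuous_image continuous_on_subset[OF phi_cont]) auto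
  moreover have "\<phi> ` support f \<subseteq> ball 0 1" using sf phiB by blast
  ultimately obtain r where r: "r < 1" "\<forall>z\<in>\<phi> ` support f. norm z \<le> r"
    using compact_ball_bound by blast
  have gfix: "g z = z" if "r < norm z" for z
  proof (cases "norm z \<le> 1")
    case True
    have "\<psi> z \<notin> support f"
    proof
      assume "\<psi> z \<in> support f"
      then have "norm (\<phi> (\<psi> z)) \<le> r" using r by blast
      then show False using phi_psi True that by simp
    qed
    then have "\<psi> z \<notin> {x. f x \<noteq> x}" unfolding support_def using closure_subset[of "{x. f x \<noteq> x}"] by (meson subsetD)
    then have "f (\<psi> z) = \<psi> z" by simp
    then show ?thesis unfolding g_def using True phi_psi by simp
  next
    case False then show ?thesis unfolding g_def by simp
  qed
  show ?thesis by (rule exI[of _ g], rule exI[of _ r]) (use gG r(1) gfix Trg in auto)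
qed

end


lemma pad_set:
  assumes X: "infinite X" and S0: "finite S0" "S0 \<subseteq> X" "card S0 \<le> m"
  shows "\<exists>S. S0 \<subseteq> S \<and> S \<subseteq> X \<and> finite S \<and> card S = m"
proof -
  have "infinite (X - S0)" using X S0(1) by (rule Diff_infinite_finite[rotated])
  then obtain T where T: "T \<subseteq> X - S0" "finite T" "card T = m - card S0"
    using infinite_arbitrarily_large by blast
  have "card (S0 \<union> T) = card S0 + card T"
    using T S0 by (intro card_Un_disjoint) auto
  then have "card (S0 \<union> T) = m" using T S0 by simp
  then show ?thesis using T S0 by (intro exI[of _ "S0 \<union> T"]) auto
qed

lemma Gb_infinite: "infinite (Gb :: ('a::euclidean_space \<Rightarrow> 'a) set)"
proof -
  obtain e :: 'a where e: "e \<in> Basis" using nonempty_Basis by blast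
  define z0 :: 'a where "z0 = (1/2) *\<^sub>R e"
  have nz0: "norm z0 = 1/2" unfolding z0_def using e by simp
  have QG: "(Q0 :: 'a \<Rightarrow> 'a) \<in> Gb" by (rule Q0_Gb)
  have lt1: "norm ((Q0 ^^ k) z0) < 1" for k
    using Gb_ball[OF Gb_funpow[OF QG, of k]] nz0 by simp
  have step: "norm w < norm (Q0 w)" if "0 < norm w" "norm w < 1" for w :: 'a
  proof -
    have "norm (Q0 w) = norm w * (2 - norm w)" using Q0_norm[of w] that by (simp add: lQ_def)
    moreover have "norm w * 1 < norm w * (2 - norm w)" using that by (intro mult_strict_left_mono) auto
    ultimately show ?thesis by simp
  qed
  have ge: "norm z0 \<le> norm ((Q0 ^^ k) z0)" for k
  proof (induction k)
    case (Suc k)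
    have "0 < norm ((Q0 ^^ k) z0)" using Suc nz0 by linarith
    then have "norm ((Q0 ^^ k) z0) < norm ((Q0 ^^ Suc k) z0)" using step lt1 by simp
    then show ?case using Suc by simp
  qed simp
  have sm: "strict_mono (\<lambda>k. norm ((Q0 ^^ k) z0))"
  proof (rule strict_monoI_Suc)
    fix k
    have "0 < norm ((Q0 ^^ k) z0)" using ge[of k] nz0 by linarith
    then show "norm ((Q0 ^^ k) z0) < norm ((Q0 ^^ Suc k) z0)" using step lt1 by simp
  qed
  have "inj (\<lambda>k. (Q0 :: 'a \<Rightarrow> 'a) ^^ k)"
  proof (rule injI)
    fix i j assume "(Q0 :: 'a \<Rightarrow> 'a) ^^ i = Q0 ^^ j"
    then have "norm ((Q0 ^^ i) z0) = norm ((Q0 ^^ j) z0)" by simp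
    then show "i = j" using strict_mono_eq[OF sm] by blast
  qed
  then have "infinite (range (\<lambda>k. (Q0 :: 'a \<Rightarrow> 'a) ^^ k))" by (rule range_inj_infinite)
  moreover have "range (\<lambda>k. (Q0 :: 'a \<Rightarrow> 'a) ^^ k) \<subseteq> Gb" using Gb_funpow[OF QG] by auto
  ultimately show ?thesis using infinite_super by blast
qed

theorem lemma4p3:
  fixes B :: "'m::{t2_space, second_countable_topology} set"
  assumes "topological_manifold TYPE('m) TYPE('n::finite)"
    and "standard_open_ball TYPE('n) B"
  shows "strongly_distorted (Homeo0 :: ('m \<Rightarrow> 'm) set) {f \<in> Homeo0. support f \<subseteq> B}"
proof -
  have oB: "open B" and hc: "closure B homeomorphic (cball (0::real^'n) 1)"
    and hf: "frontier B homeomorphic (sphere (0::real^'n) 1)"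
    using assms(2) unfolding standard_open_ball_def by auto
  obtain \<phi> :: "'m \<Rightarrow> real^'n" and \<psi> where hom: "homeomorphism (closure B) (cball 0 1) \<phi> \<psi>"
    using hc by (auto simp: homeomorphic_def)
  have bs: "\<phi> ` B = ball 0 1 \<and> \<phi> ` frontier B = sphere 0 1"
    by (rule ball_setup[OF assms(1) oB hom hf])
  interpret sb: sball B \<phi> \<psi>
    by unfold_locales (use oB hom bs in auto)
  have infH: "infinite (Homeo0 :: ('m \<Rightarrow> 'm) set)"
  proof
    assume fin: "finite (Homeo0 :: ('m \<Rightarrow> 'm) set)"
    have "sb.Tr ` Gb \<subseteq> Homeo0" using sb.Tr_Homeo0 by blast
    then have "finite (sb.Tr ` Gb)" using fin finite_subset by blast
    moreover have "inj_on sb.Tr Gb" using sb.Tr_inj by (meson inj_onI)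
    ultimately have "finite (Gb :: (real^'n \<Rightarrow> real^'n) set)" using finite_imageD by blast
    then show False using Gb_infinite by blast
  qed
  show ?thesis
    unfolding strongly_distorted_def
  proof (intro exI[of _ "10::nat"] exI[of _ "\<lambda>k. 6 * k + 6"] allI impI)
    fix a :: "nat \<Rightarrow> 'm \<Rightarrow> 'm"
    assume a: "\<forall>k. a k \<in> {f \<in> Homeo0. support f \<subseteq> B}"
    have "\<forall>k. \<exists>g. \<exists>r. g \<in> Gb \<and> r < 1 \<and> (\<forall>z. r < norm z \<longrightarrow> g z = z) \<and> sb.Tr g = a k"
      using a sb.from_f by blast
    then obtain G where "\<forall>k. \<exists>r. G k \<in> Gb \<and> r < 1 \<and> (\<forall>z. r < norm z \<longrightarrow> G k z = z) \<and> sb.Tr (G k) = a k"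
      by metis
    then obtain R where GR: "\<forall>k. G k \<in> Gb \<and> R k < 1 \<and> (\<forall>z. R k < norm z \<longrightarrow> G k z = z) \<and> sb.Tr (G k) = a k"
      by metis
    obtain Pp Qp Vp Wp Hp where PG: "Pp \<in> Gb" "Qp \<in> Gb" "Vp \<in> Gb" "Wp \<in> Gb" "Hp \<in> Gb"
      and Geq: "\<forall>k. G k = foldr (\<circ>) (wordl Pp (inv Pp) Qp (inv Qp) Vp (inv Vp) Wp (inv Wp) Hp (inv Hp) k) id"
      using Rn_distort[of G R] GR by blast
    define lst where "lst = [Pp, inv Pp, Qp, inv Qp, Vp, inv Vp, Wp, inv Wp, Hp, inv Hp]"
    have lG: "set lst \<subseteq> Gb" unfolding lst_def using PG Gb_inv by auto
    define S0 where "S0 = sb.Tr ` set lst"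
    have S0H: "S0 \<subseteq> Homeo0" unfolding S0_def using lG sb.Tr_Homeo0 by blast
    have S0f: "finite S0" unfolding S0_def by simp
    have "card S0 \<le> card (set lst)" unfolding S0_def by (rule card_image_le) simp
    also have "\<dots> \<le> length lst" by (rule card_length)
    finally have S0c: "card S0 \<le> 10" unfolding lst_def by simp
    obtain S where S: "S0 \<subseteq> S" "S \<subseteq> Homeo0" "finite S" "card S = 10"
      using pad_set[OF infH S0f S0H S0c] by blast
    show "\<exists>S\<subseteq>Homeo0. finite S \<and> card S = 10 \<and> (\<forall>k. a k \<in> word_power S (6 * k + 6))"
    proof (intro exI[of _ S] conjI allI)
      show "S \<subseteq> Homeo0" "finite S" "card S = 10" using S by auto
      fix k
      let ?wl = "wordl Pp (inv Pp) Qp (inv Qp) Vp (inv Vp) Wp (inv Wp) Hp (inv Hp) k"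
      have wl: "set ?wl \<subseteq> set lst" using wordl_set unfolding lst_def by simp
      have wG: "set ?wl \<subseteq> Gb" using wl lG by blast
      have "a k = sb.Tr (G k)" using GR by simp
      also have "\<dots> = sb.Tr (foldr (\<circ>) ?wl id)" using Geq by simp
      also have "\<dots> = foldr (\<circ>) (map sb.Tr ?wl) id" using sb.Tr_foldr[OF wG] by simp
      finally have ak: "a k = foldr (\<circ>) (map sb.Tr ?wl) id" .
      have "length (map sb.Tr ?wl) = 6 * k + 6" by (simp add: wordl_length)
      moreover have "set (map sb.Tr ?wl) \<subseteq> S"
      proof -
        from wl have "set (map sb.Tr ?wl) \<subseteq> S0" unfolding S0_def by auto
        then show ?thesis using S(1) by blast
      qed
      ultimately show "a k \<in> word_power S (6 * k + 6)"
        unfolding word_power_def using ak by blast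
    qed
  qed
qed

end
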